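(* (1) For any $\Delta$-set $X$, the realisations $|X|$ and $|Sd_{\square}(X)|$ are homeomorphic. (2) For any $\square$-set $C$, the realisations $|C|$ and $|Sd_{\Delta}(C)|$ are homeomorphic.
   Context: A $\square$-set $C$ consists of sets $C_n$ ($n\ge 0$) and face maps $\partial_i^\epsilon\colon C_n\to C_{n-1}$ ($1\le i\le n$, $\epsilon\in\{0,1\}$) with $\partial^\eta_{j-1}\partial^\epsilon_i=\partial^\epsilon_i\partial^\eta_j$ for $1\le i<j\le n$. Equivalently it is a contravariant functor from the category whose objects are the cubes $I^n=[0,1]^n$ and whose morphisms are the face maps $\lambda\colon I^p\to I^n$ (maps which keep the order of the coordinates $(x_1,\dots,x_p)$ and insert $n-p$ constant coordinates equal to $0$ or $1$); $\lambda^*\colon C_n\to C_p$ denotes the induced map. A face map is a front (resp. back) face map if it inserts only $0$'s (resp. only $1$'s); every face map $\nu$ factors uniquely as $\nu=\lambda'\circ\mu'$ with $\lambda'$ front and $\mu'$ back (front–back decomposition). The realisation $|C|$ is $\coprod_n C_n\times I^n$ modulo $(\lambda^*x,t)\sim(x,\lambda t)$. A $\Delta$-set $X$ consists of sets $X_n$ and face maps $\partial_i\colon X_n\to X_{n-1}$, $0\le i\le n$, with $\partial_i\partial_j=\partial_{j-1}\partial_i$ for $i<j$; equivalently a contravariant functor on standard simplices $\Delta^n=\{x\in\mathbb{R}^{n+1}: x_i\ge 0,\ \sum x_i=1\}$ and their order-preserving face inclusions; its realisation is $\coprod X_n\times\Delta^n$ modulo the analogous identifications. $Sd_\Delta(C)$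 is the $\Delta$-set whose $k$-simplices are tuples $(c,\lambda_1,\dots,\lambda_k)$ with $c\in C_n$, $\lambda_i\colon I^{n_{i-1}}\to I^{n_i}$ face maps, $n_0<n_1<\dots<n_k=n$, with faces $\partial_0(c,\lambda_1,\dots,\lambda_k)=(c,\lambda_2,\dots,\lambda_k)$, $\partial_i(c,\lambda_1,\dots,\lambda_k)=(c,\lambda_1,\dots,\lambda_{i-1},\lambda_{i+1}\lambda_i,\lambda_{i+2},\dots,\lambda_k)$ for $0<i<k$, and $\partial_k(c,\lambda_1,\dots,\lambda_k)=(\lambda_k^*c,\lambda_1,\dots,\lambda_{k-1})$. $Sd_\square(X)$ is the $\square$-set with $Sd_\square(X)_k=\coprod_{n>k}X_{n-1}\times B(k,n)$, where $B(k,n)$ is the set of back face maps $I^k\to I^n$. For a front face map $\lambda'\colon I^t\to I^n$ let $r(\lambda')\colon\Delta^{t-1}\to\Delta^{n-1}$ be its restriction (a simplicial face map, $\Delta^{t-1}\subset I^t$). For $x\in X_{n-1}$, $\lambda\in B(k,n)$ and a face map $\mu\colon I^s\to I^k$, write the front–back decomposition $\lambda\mu=\lambda'\mu'$ and set $\mu^*(x,\lambda)=(r(\lambda')^*x,\mu')$. *)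

theory Defs
  imports "HOL-Analysis.Analysis"
begin

text \<open>A face map (cubical or simplicial) is encoded as a list whose length is the number of
coordinates of the target; entry None is a free coordinate (filled, in order, by the
coordinates of the source), entry Some c is an inserted constant.
Cubical face maps I^p to I^n: bool option list of length n with p Nones
(Some False = inserted 0, Some True = inserted 1).
Simplicial face maps Delta^p to Delta^n (order preserving inclusions): unit option list of
length n+1 with p+1 Nones (Some () = inserted barycentric coordinate 0, i.e. a vertex not hit).\<close>

definition fdim :: "'c option list \<Rightarrow> nat" where
  "fdim l = length (filter (\<lambda>e. e = None) l)"

text \<open>Composition: fcomp l m is the composite l o m.\<close>
fun fcomp :: "'c option list \<Rightarrow> 'c option list \<Rightarrow> 'c option list" where
  "fcomp [] ms = []"
| "fcomp (Some c # ls) ms = Some c # fcomp ls ms"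
| "fcomp (None # ls) ms = (case ms of [] \<Rightarrow> None # fcomp ls [] | m # ms' \<Rightarrow> m # fcomp ls ms')"

text \<open>Points of R^n are functions nat => real vanishing from n on.  fappf l v t applies the
face map l to the point t, the constant c being the real number v c.\<close>
fun fappf :: "'c option list \<Rightarrow> ('c \<Rightarrow> real) \<Rightarrow> (nat \<Rightarrow> real) \<Rightarrow> nat \<Rightarrow> real" where
  "fappf [] v t = (\<lambda>i. 0)"
| "fappf (Some c # ls) v t = (\<lambda>i. if i = 0 then v c else fappf ls v t (i - 1))"
| "fappf (None # ls) v t = (\<lambda>i. if i = 0 then t 0 else fappf ls v (\<lambda>j. t (Suc j)) (i - 1))"

text \<open>Face maps from shape p to shape n; k = 0 for cubes (I^n has n coordinates),
k = 1 for simplices (Delta^n has n+1 coordinates).\<close>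
definition faces_of :: "nat \<Rightarrow> nat \<Rightarrow> nat \<Rightarrow> 'c option list set" where
  "faces_of k p n = {l. length l = n + k \<and> fdim l = p + k}"

abbreviation cface :: "nat \<Rightarrow> nat \<Rightarrow> bool option list set" where
  "cface \<equiv> faces_of 0"

abbreviation sface :: "nat \<Rightarrow> nat \<Rightarrow> unit option list set" where
  "sface \<equiv> faces_of 1"

definition cval :: "bool \<Rightarrow> real" where
  "cval b = (if b then 1 else 0)"

definition sval :: "unit \<Rightarrow> real" where
  "sval u = 0"

definition front_face :: "nat \<Rightarrow> nat \<Rightarrow> bool option list set" where
  "front_face p n = {l \<in> cface p n. \<forall>e \<in> set l. e \<noteq> Some True}"

definition back_face :: "nat \<Rightarrow> nat \<Rightarrow> bool option list set" where
  "back_face p n = {l \<in> cface p n. \<forall>e \<in> set l. e \<noteq> Some False}"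

definition presheaf :: "nat \<Rightarrow> (nat \<Rightarrow> 'a set) \<Rightarrow> ('c option list \<Rightarrow> 'a \<Rightarrow> 'a) \<Rightarrow> bool" where
  "presheaf k S act \<longleftrightarrow>
     (\<forall>p n l x. l \<in> faces_of k p n \<and> x \<in> S n \<longrightarrow> act l x \<in> S p) \<and>
     (\<forall>n x. x \<in> S n \<longrightarrow> act (replicate (n + k) None) x = x) \<and>
     (\<forall>s p n l m x. l \<in> faces_of k p n \<and> m \<in> faces_of k s p \<and> x \<in> S n
         \<longrightarrow> act (fcomp l m) x = act m (act l x))"

definition delta_set :: "(nat \<Rightarrow> 'a set) \<Rightarrow> (unit option list \<Rightarrow> 'a \<Rightarrow> 'a) \<Rightarrow> bool" where
  "delta_set X d \<longleftrightarrow> presheaf 1 X d"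

definition cube_set :: "(nat \<Rightarrow> 'a set) \<Rightarrow> (bool option list \<Rightarrow> 'a \<Rightarrow> 'a) \<Rightarrow> bool" where
  "cube_set C c \<longleftrightarrow> presheaf 0 C c"

definition std_cube :: "nat \<Rightarrow> (nat \<Rightarrow> real) set" where
  "std_cube n = {t. (\<forall>i<n. 0 \<le> t i \<and> t i \<le> 1) \<and> (\<forall>i\<ge>n. t i = 0)}"

definition std_simplex :: "nat \<Rightarrow> (nat \<Rightarrow> real) set" where
  "std_simplex n = {t. (\<forall>i\<le>n. 0 \<le> t i) \<and> (\<forall>i>n. t i = 0) \<and> (\<Sum>i\<le>n. t i) = 1}"

definition quot_top :: "'a topology \<Rightarrow> ('a \<times> 'a) set \<Rightarrow> 'a set topology" where
  "quot_top T R = topology (\<lambda>U. U \<subseteq> topspace T // R \<and> openin T (\<Union>U))"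

definition real_total :: "(nat \<Rightarrow> 'a set) \<Rightarrow> (nat \<Rightarrow> (nat \<Rightarrow> real) set) \<Rightarrow> (nat \<times> 'a \<times> (nat \<Rightarrow> real)) set" where
  "real_total S shape = {(n, x, t). x \<in> S n \<and> t \<in> shape n}"

definition total_top :: "(nat \<Rightarrow> 'a set) \<Rightarrow> (nat \<Rightarrow> (nat \<Rightarrow> real) set) \<Rightarrow> (nat \<times> 'a \<times> (nat \<Rightarrow> real)) topology" where
  "total_top S shape = topology (\<lambda>U. U \<subseteq> real_total S shape \<and>
      (\<forall>n x. x \<in> S n \<longrightarrow> openin (top_of_set (shape n)) {t. (n, x, t) \<in> U}))"

definition real_gen :: "(nat \<Rightarrow> 'a set) \<Rightarrow> (nat \<Rightarrow> (nat \<Rightarrow> real) set) \<Rightarrow> (nat \<Rightarrow> nat \<Rightarrow> 'f set)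
    \<Rightarrow> ('f \<Rightarrow> 'a \<Rightarrow> 'a) \<Rightarrow> ('f \<Rightarrow> (nat \<Rightarrow> real) \<Rightarrow> (nat \<Rightarrow> real))
    \<Rightarrow> ((nat \<times> 'a \<times> (nat \<Rightarrow> real)) \<times> (nat \<times> 'a \<times> (nat \<Rightarrow> real))) set" where
  "real_gen S shape faces act app =
     {((p, act l x, t), (n, x, app l t)) | p n l x t. l \<in> faces p n \<and> x \<in> S n \<and> t \<in> shape p}"

definition realisation :: "(nat \<Rightarrow> 'a set) \<Rightarrow> (nat \<Rightarrow> (nat \<Rightarrow> real) set) \<Rightarrow> (nat \<Rightarrow> nat \<Rightarrow> 'f set)
    \<Rightarrow> ('f \<Rightarrow> 'a \<Rightarrow> 'a) \<Rightarrow> ('f \<Rightarrow> (nat \<Rightarrow> real) \<Rightarrow> (nat \<Rightarrow> real))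
    \<Rightarrow> (nat \<times> 'a \<times> (nat \<Rightarrow> real)) set topology" where
  "realisation S shape faces act app =
     quot_top (total_top S shape) ((real_gen S shape faces act app \<union> (real_gen S shape faces act app)\<inverse>)\<^sup>*)"

definition delta_real :: "(nat \<Rightarrow> 'a set) \<Rightarrow> (unit option list \<Rightarrow> 'a \<Rightarrow> 'a) \<Rightarrow> (nat \<times> 'a \<times> (nat \<Rightarrow> real)) set topology" where
  "delta_real X d = realisation X std_simplex sface d (\<lambda>l. fappf l sval)"

definition cube_real :: "(nat \<Rightarrow> 'a set) \<Rightarrow> (bool option list \<Rightarrow> 'a \<Rightarrow> 'a) \<Rightarrow> (nat \<times> 'a \<times> (nat \<Rightarrow> real)) set topology" where
  "cube_real C c = realisation C std_cube cface c (\<lambda>l. fappf l cval)"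

definition sd_box :: "(nat \<Rightarrow> 'a set) \<Rightarrow> nat \<Rightarrow> ('a \<times> bool option list) set" where
  "sd_box X k = {(x, l). l \<in> back_face k (length l) \<and> k < length l \<and> x \<in> X (length l - 1)}"

text \<open>mu^*(x,l) = (r(l')^* x, mu') where l mu = l' mu' is the front-back decomposition.\<close>
definition front_part :: "bool option list \<Rightarrow> bool option list" where
  "front_part nu = map (\<lambda>e. if e = Some False then Some False else None) nu"

definition back_part :: "bool option list \<Rightarrow> bool option list" where
  "back_part nu = filter (\<lambda>e. e \<noteq> Some False) nu"

text \<open>Restriction r(l') of a front face map to the simplices Delta^(t-1) in I^t.\<close>
definition restr :: "bool option list \<Rightarrow> unit option list" where
  "restr l = map (\<lambda>e. if e = None then None else Some ()) l"

definition sd_box_act :: "(unit option list \<Rightarrow> 'a \<Rightarrow> 'a) \<Rightarrow> bool option list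
    \<Rightarrow> ('a \<times> bool option list) \<Rightarrow> ('a \<times> bool option list)" where
  "sd_box_act d mu xl = (case xl of (x, l) \<Rightarrow>
     (let nu = fcomp l mu in (d (restr (front_part nu)) x, back_part nu)))"

text \<open>k-simplices: (n, c, [l_1,...,l_k]) with c in C n, l_i : I^(n_(i-1)) -> I^(n_i),
n_0 < ... < n_k = n (for k = 0 just (n, c, [])).\<close>
definition sd_delta :: "(nat \<Rightarrow> 'a set) \<Rightarrow> nat \<Rightarrow> (nat \<times> 'a \<times> bool option list list) set" where
  "sd_delta C k = {(n, c, ls). c \<in> C n \<and> length ls = k \<and>
      (\<forall>i<k. fdim (ls ! i) < length (ls ! i)) \<and>
      (\<forall>i. Suc i < k \<longrightarrow> length (ls ! i) = fdim (ls ! Suc i)) \<and>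
      (0 < k \<longrightarrow> length (ls ! (k - 1)) = n)}"

text \<open>cmpn ls a m = l_(a+m+1) o ... o l_(a+1)  (0-indexed list entries ls!a .. ls!(a+m)).\<close>
primrec cmpn :: "bool option list list \<Rightarrow> nat \<Rightarrow> nat \<Rightarrow> bool option list" where
  "cmpn ls a 0 = ls ! a"
| "cmpn ls a (Suc m) = fcomp (ls ! (a + Suc m)) (cmpn ls a m)"

definition hits :: "unit option list \<Rightarrow> nat list" where
  "hits l = [j \<leftarrow> [0..<length l]. l ! j = None]"

text \<open>Action of a general simplicial face inclusion l : Delta^p -> Delta^k (hitting vertices
j_0 < ... < j_p) on a k-simplex: keep the objects n_(j_0),...,n_(j_p) with the composite
maps between them, and restrict c along the composite n_(j_p) -> n_k.  On the elementary
faces this is exactly the formula for d_0, d_i, d_k of the paper.\<close>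
definition sd_delta_act :: "(bool option list \<Rightarrow> 'a \<Rightarrow> 'a) \<Rightarrow> unit option list
    \<Rightarrow> (nat \<times> 'a \<times> bool option list list) \<Rightarrow> (nat \<times> 'a \<times> bool option list list)" where
  "sd_delta_act c l s = (case s of (n, x, ls) \<Rightarrow>
     (let k = length ls; js = hits l; p = length js - 1; jp = last js in
      (if jp = k then n else fdim (ls ! jp),
       if jp = k then x else c (cmpn ls jp (k - jp - 1)) x,
       map (\<lambda>a. cmpn ls (js ! a) (js ! Suc a - js ! a - 1)) [0..<p])))"

end

theory Submission
  imports Defs
begin

lemma quot_istop:
  assumes eq: "equiv UNIV R"
  shows "istopology (\<lambda>U. U \<subseteq> topspace T // R \<and> openin T (\<Union>U))"
proof -
  have I: "(U \<inter> V) \<subseteq> topspace T // R \<and> openin T (\<Union>(U \<inter> V))"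
    if U: "U \<subseteq> topspace T // R \<and> openin T (\<Union>U)" and V: "V \<subseteq> topspace T // R \<and> openin T (\<Union>V)" for U V
  proof -
  have "\<Union>(U \<inter> V) = \<Union>U \<inter> \<Union>V"
  proof
    show "\<Union>U \<inter> \<Union>V \<subseteq> \<Union>(U \<inter> V)"
    proof
      fix z assume "z \<in> \<Union>U \<inter> \<Union>V"
      then obtain A B where AB: "A \<in> U" "B \<in> V" "z \<in> A" "z \<in> B" by blast
      have "A \<in> UNIV // R" "B \<in> UNIV // R" using AB U V unfolding quotient_def by auto
      then have "A = B" using AB quotient_disj[OF eq] by (metis IntI empty_iff)
      then show "z \<in> \<Union>(U \<inter> V)" using AB by blast
    qed
  qed blast
  then show ?thesis using U V by auto
  qed
  have II: "\<Union>K \<subseteq> topspace T // R \<and> openin T (\<Union>(\<Union>K))"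
    if "\<forall>U\<in>K. U \<subseteq> topspace T // R \<and> openin T (\<Union>U)" for K
  proof -
    have "\<Union>(\<Union>K) = \<Union>((\<lambda>U. \<Union>U) ` K)" by auto
    moreover have "openin T (\<Union>((\<lambda>U. \<Union>U) ` K))" using that by (intro openin_Union) auto
    ultimately show ?thesis using that by auto
  qed
  show ?thesis unfolding istopology_def using I II by blast
qed

lemma openin_quot:
  assumes eq: "equiv UNIV R"
  shows "openin (quot_top T R) U \<longleftrightarrow> U \<subseteq> topspace T // R \<and> openin T (\<Union>U)"
  unfolding quot_top_def using quot_istop[OF eq] by simp

lemma topspace_quot:
  assumes eq: "equiv UNIV R" and cl: "R `` topspace T \<subseteq> topspace T"
  shows "topspace (quot_top T R) = topspace T // R"
proof -
  have "\<Union>(topspace T // R) = topspace T"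
  proof
    show "\<Union>(topspace T // R) \<subseteq> topspace T" using cl unfolding quotient_def by blast
    show "topspace T \<subseteq> \<Union>(topspace T // R)" unfolding quotient_def
      using eq by (auto simp: equiv_def refl_on_def)
  qed
  then have "openin (quot_top T R) (topspace T // R)" using openin_quot[OF eq] by simp
  moreover have "topspace (quot_top T R) \<subseteq> topspace T // R"
    using openin_quot[OF eq] by (metis openin_topspace)
  ultimately show ?thesis using openin_subset by blast
qed

lemma quot_induced_cont:
  assumes eq: "equiv UNIV R" and cl: "R `` topspace T \<subseteq> topspace T"
    and resp: "\<And>a b. (a,b) \<in> R \<Longrightarrow> a \<in> topspace T \<Longrightarrow> f a = f b"
    and cont: "continuous_map T Y f"
  shows "continuous_map (quot_top T R) Y (\<lambda>U. f (SOME z. z \<in> U))"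
proof -
  have val: "f (SOME z. z \<in> R``{a}) = f a" if "a \<in> topspace T" for a
  proof -
    have "a \<in> R``{a}" using eq by (auto simp: equiv_def refl_on_def)
    then have "(SOME z. z \<in> R``{a}) \<in> R``{a}" by (rule someI)
    then show ?thesis using resp that by auto
  qed
  show ?thesis unfolding continuous_map_def
  proof (intro conjI allI impI)
    show "(\<lambda>U. f (SOME z. z \<in> U)) \<in> topspace (quot_top T R) \<rightarrow> topspace Y"
      unfolding topspace_quot[OF eq cl] quotient_def using val cont
      by (auto simp: continuous_map_def)
    fix V assume V: "openin Y V"
    have "\<Union>{U \<in> topspace (quot_top T R). f (SOME z. z \<in> U) \<in> V} = {a \<in> topspace T. f a \<in> V}"
    proof
      show "\<Union>{U \<in> topspace (quot_top T R). f (SOME z. z \<in> U) \<in> V} \<subseteq> {a \<in> topspace T. f a \<in> V}"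
      proof
        fix b assume "b \<in> \<Union>{U \<in> topspace (quot_top T R). f (SOME z. z \<in> U) \<in> V}"
        then obtain a where a: "a \<in> topspace T" "b \<in> R``{a}" "f (SOME z. z \<in> R``{a}) \<in> V"
          unfolding topspace_quot[OF eq cl] quotient_def by auto
        have "b \<in> topspace T" using a cl by blast
        moreover have "f b = f a" using resp a by auto
        ultimately show "b \<in> {a \<in> topspace T. f a \<in> V}" using a val by auto
      qed
      show "{a \<in> topspace T. f a \<in> V} \<subseteq> \<Union>{U \<in> topspace (quot_top T R). f (SOME z. z \<in> U) \<in> V}"
      proof
        fix a assume a: "a \<in> {a \<in> topspace T. f a \<in> V}"
        have "a \<in> R``{a}" using eq by (auto simp: equiv_def refl_on_def)
        moreover have "R``{a} \<in> topspace T // R" using a unfolding quotient_def by auto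
        ultimately show "a \<in> \<Union>{U \<in> topspace (quot_top T R). f (SOME z. z \<in> U) \<in> V}"
          unfolding topspace_quot[OF eq cl] using a val by auto
      qed
    qed
    moreover have "openin T {a \<in> topspace T. f a \<in> V}"
      using cont V by (simp add: continuous_map_def)
    ultimately show "openin (quot_top T R) {U \<in> topspace (quot_top T R). f (SOME z. z \<in> U) \<in> V}"
      unfolding openin_quot[OF eq] using topspace_quot[OF eq cl] by auto
  qed
qed

lemma quot_induced_val:
  assumes eq: "equiv UNIV R"
    and resp: "\<And>a b. (a,b) \<in> R \<Longrightarrow> a \<in> topspace T \<Longrightarrow> f a = f b"
    and a: "a \<in> topspace T"
  shows "(\<lambda>U. f (SOME z. z \<in> U)) (R``{a}) = f a"
proof -
  have "a \<in> R``{a}" using eq by (auto simp: equiv_def refl_on_def)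
  then have "(SOME z. z \<in> R``{a}) \<in> R``{a}" by (rule someI)
  then show ?thesis using resp a by auto
qed

lemma quot_proj_cont:
  assumes eq: "equiv UNIV R" and cl: "R `` topspace T \<subseteq> topspace T"
  shows "continuous_map T (quot_top T R) (\<lambda>z. R``{z})"
  unfolding continuous_map_def
proof (intro conjI allI impI)
  show "(\<lambda>z. R``{z}) \<in> topspace T \<rightarrow> topspace (quot_top T R)"
    unfolding topspace_quot[OF eq cl] quotient_def by auto
  fix U assume U: "openin (quot_top T R) U"
  then have U': "U \<subseteq> topspace T // R" "openin T (\<Union>U)" using openin_quot[OF eq] by auto
  have "{z \<in> topspace T. R``{z} \<in> U} = \<Union>U"
  proof
    show "{z \<in> topspace T. R``{z} \<in> U} \<subseteq> \<Union>U"
      using eq by (auto simp: equiv_def refl_on_def)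
    show "\<Union>U \<subseteq> {z \<in> topspace T. R``{z} \<in> U}"
    proof
      fix z assume "z \<in> \<Union>U"
      then obtain A where A: "A \<in> U" "z \<in> A" by blast
      then obtain a where a: "a \<in> topspace T" "A = R``{a}" using U' unfolding quotient_def by blast
      then have "R``{z} = A" using A eq by (metis equiv_class_eq_iff Image_singleton_iff UNIV_I)
      moreover have "z \<in> topspace T" using a A cl by blast
      ultimately show "z \<in> {z \<in> topspace T. R``{z} \<in> U}" using A by auto
    qed
  qed
  then show "openin T {z \<in> topspace T. R``{z} \<in> U}" using U' by simp
qed

lemma total_istop:
  "istopology (\<lambda>U. U \<subseteq> real_total S shape \<and>
      (\<forall>n x. x \<in> S n \<longrightarrow> openin (top_of_set (shape n)) {t. (n, x, t) \<in> U}))"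
proof -
  have I: "{t. (n, x, t) \<in> U \<inter> V} = {t. (n, x, t) \<in> U} \<inter> {t. (n, x, t) \<in> V}" for n x U V by auto
  have II: "{t. (n, x, t) \<in> \<Union>K} = \<Union>((\<lambda>U. {t. (n, x, t) \<in> U}) ` K)" for n x K by auto
  have A: "openin (top_of_set (shape n)) {t. (n, x, t) \<in> U \<inter> V}"
    if "openin (top_of_set (shape n)) {t. (n, x, t) \<in> U}" "openin (top_of_set (shape n)) {t. (n, x, t) \<in> V}" for n x U V
    unfolding I using that by (intro openin_Int)
  have B: "openin (top_of_set (shape n)) {t. (n, x, t) \<in> \<Union>K}"
    if "\<forall>U\<in>K. openin (top_of_set (shape n)) {t. (n, x, t) \<in> U}" for n x K
    unfolding II using that by (intro openin_Union) auto
  have 1: "U \<inter> V \<subseteq> real_total S shape \<and>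
      (\<forall>n x. x \<in> S n \<longrightarrow> openin (top_of_set (shape n)) {t. (n, x, t) \<in> U \<inter> V})"
    if "U \<subseteq> real_total S shape \<and>
      (\<forall>n x. x \<in> S n \<longrightarrow> openin (top_of_set (shape n)) {t. (n, x, t) \<in> U})"
     "V \<subseteq> real_total S shape \<and>
      (\<forall>n x. x \<in> S n \<longrightarrow> openin (top_of_set (shape n)) {t. (n, x, t) \<in> V})" for U V
  proof (intro conjI allI impI)
    show "U \<inter> V \<subseteq> real_total S shape" using that by blast
    fix n x assume "x \<in> S n"
    then show "openin (top_of_set (shape n)) {t. (n, x, t) \<in> U \<inter> V}" using that by (intro A) simp_all
  qed
  have 2: "\<Union>K \<subseteq> real_total S shape \<and>
      (\<forall>n x. x \<in> S n \<longrightarrow> openin (top_of_set (shape n)) {t. (n, x, t) \<in> \<Union>K})"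
    if "\<forall>U\<in>K. U \<subseteq> real_total S shape \<and>
      (\<forall>n x. x \<in> S n \<longrightarrow> openin (top_of_set (shape n)) {t. (n, x, t) \<in> U})" for K
  proof (intro conjI allI impI)
    show "\<Union>K \<subseteq> real_total S shape" using that by blast
    fix n x assume "x \<in> S n"
    then show "openin (top_of_set (shape n)) {t. (n, x, t) \<in> \<Union>K}" using that by (intro B) simp
  qed
  show ?thesis unfolding istopology_def
    by (intro conjI allI impI 1 2) auto
qed

lemma openin_total:
  "openin (total_top S shape) U \<longleftrightarrow> U \<subseteq> real_total S shape \<and>
      (\<forall>n x. x \<in> S n \<longrightarrow> openin (top_of_set (shape n)) {t. (n, x, t) \<in> U})"
  unfolding total_top_def topology_inverse'[OF total_istop] by simp

lemma topspace_total: "topspace (total_top S shape) = real_total S shape"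
proof -
  have "openin (total_top S shape) (real_total S shape)"
    unfolding openin_total by (auto simp: real_total_def)
  moreover have "topspace (total_top S shape) \<subseteq> real_total S shape"
    using openin_total by (metis openin_topspace)
  ultimately show ?thesis using openin_subset by blast
qed

lemma cont_from_total:
  assumes "\<And>n x. x \<in> S n \<Longrightarrow> continuous_map (top_of_set (shape n)) Y (\<lambda>t. f (n, x, t))"
  shows "continuous_map (total_top S shape) Y f"
  unfolding continuous_map_def
proof (intro conjI allI impI)
  show "f \<in> topspace (total_top S shape) \<rightarrow> topspace Y"
    unfolding topspace_total using assms by (fastforce simp: real_total_def continuous_map_def)
  fix V assume V: "openin Y V"
  show "openin (total_top S shape) {z \<in> topspace (total_top S shape). f z \<in> V}"
    unfolding openin_total topspace_total
  proof (intro conjI allI impI)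
    fix n x assume x: "x \<in> S n"
    have "{t. (n, x, t) \<in> {z \<in> real_total S shape. f z \<in> V}} = {t \<in> topspace (top_of_set (shape n)). f (n, x, t) \<in> V}"
      using x by (auto simp: real_total_def)
    then show "openin (top_of_set (shape n)) {t. (n, x, t) \<in> {z \<in> real_total S shape. f z \<in> V}}"
      using assms[OF x] V by (simp add: continuous_map_def)
  qed auto
qed

lemma cont_into_total:
  assumes x: "x \<in> S n"
  shows "continuous_map (top_of_set (shape n)) (total_top S shape) (\<lambda>t. (n, x, t))"
  unfolding continuous_map_def
proof (intro conjI allI impI)
  show "(\<lambda>t. (n, x, t)) \<in> topspace (top_of_set (shape n)) \<rightarrow> topspace (total_top S shape)"
    unfolding topspace_total using x by (auto simp: real_total_def)
  fix U assume "openin (total_top S shape) U"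
  then have U: "U \<subseteq> real_total S shape" "openin (top_of_set (shape n)) {t. (n, x, t) \<in> U}"
    using x unfolding openin_total by auto
  have "{t \<in> topspace (top_of_set (shape n)). (n, x, t) \<in> U} = {t. (n, x, t) \<in> U}"
    using U(1) by (auto simp: real_total_def)
  then show "openin (top_of_set (shape n)) {t \<in> topspace (top_of_set (shape n)). (n, x, t) \<in> U}"
    using U(2) by simp
qed

definition grel where
  "grel S shape faces act app = (real_gen S shape faces act app \<union> (real_gen S shape faces act app)\<inverse>)\<^sup>*"

lemma realisation_grel: "realisation S shape faces act app = quot_top (total_top S shape) (grel S shape faces act app)"
  unfolding realisation_def grel_def by simp

lemma equiv_grel: "equiv UNIV (grel S shape faces act app)"
proof -
  let ?G = "real_gen S shape faces act app"
  have "sym (?G \<union> ?G\<inverse>)" by (auto simp: sym_def)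
  then show ?thesis unfolding grel_def equiv_def
    by (auto simp: refl_on_def sym_rtrancl trans_rtrancl)
qed

lemma grel_closed:
  assumes valid: "\<And>p n l x t. l \<in> faces p n \<Longrightarrow> x \<in> S n \<Longrightarrow> t \<in> shape p \<Longrightarrow> act l x \<in> S p \<and> app l t \<in> shape n"
  shows "grel S shape faces act app `` real_total S shape \<subseteq> real_total S shape"
proof -
  let ?G = "real_gen S shape faces act app"
  have "b \<in> real_total S shape" if "(a, b) \<in> (?G \<union> ?G\<inverse>)\<^sup>*" "a \<in> real_total S shape" for a b
    using that
  proof (induction rule: rtrancl_induct)
    case base then show ?case .
  next
    case (step b c)
    then show ?case using valid unfolding real_gen_def real_total_def by blast
  qed
  then show ?thesis unfolding grel_def by blast
qed

lemma grel_gen: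
  "l \<in> faces p n \<Longrightarrow> x \<in> S n \<Longrightarrow> t \<in> shape p \<Longrightarrow>
    ((p, act l x, t), (n, x, app l t)) \<in> grel S shape faces act app"
  unfolding grel_def real_gen_def by blast

lemma grel_induct_resp:
  assumes "(a, b) \<in> grel S shape faces act app"
    and "\<And>p n l x t. l \<in> faces p n \<Longrightarrow> x \<in> S n \<Longrightarrow> t \<in> shape p \<Longrightarrow>
           (F (p, act l x, t), F (n, x, app l t)) \<in> Q"
    and "equiv UNIV Q"
  shows "(F a, F b) \<in> Q"
proof -
  let ?G = "real_gen S shape faces act app"
  have "(a, b) \<in> (?G \<union> ?G\<inverse>)\<^sup>*" using assms(1) unfolding grel_def .
  then show ?thesis
  proof (induction rule: rtrancl_induct)
    case base then show ?case using assms(3) by (auto simp: equiv_def refl_on_def)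
  next
    case (step b c)
    have "(F b, F c) \<in> Q"
    proof (cases "(b, c) \<in> ?G")
      case True then show ?thesis using assms(2) unfolding real_gen_def by blast
    next
      case False
      then have "(c, b) \<in> ?G" using step(2) by blast
      then have "(F c, F b) \<in> Q" using assms(2) unfolding real_gen_def by blast
      then show ?thesis using assms(3) by (meson equiv_def symE)
    qed
    then show ?case using step(3) assms(3) by (meson equiv_def transE)
  qed
qed

theorem realisation_homeo:
  fixes SA :: "nat \<Rightarrow> 'a set" and SB :: "nat \<Rightarrow> 'b set"
    and fc :: "nat \<Rightarrow> 'a \<Rightarrow> nat \<times> 'b" and fphi :: "nat \<Rightarrow> 'a \<Rightarrow> (nat \<Rightarrow> real) \<Rightarrow> (nat \<Rightarrow> real)"
    and F :: "nat \<times> 'a \<times> (nat \<Rightarrow> real) \<Rightarrow> nat \<times> 'b \<times> (nat \<Rightarrow> real)"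
  assumes F_def: "\<And>n x t. F (n, x, t) = (fst (fc n x), snd (fc n x), fphi n x t)"
  assumes validA: "\<And>p n l x t. l \<in> facesA p n \<Longrightarrow> x \<in> SA n \<Longrightarrow> t \<in> shA p \<Longrightarrow> actA l x \<in> SA p \<and> appA l t \<in> shA n"
    and validB: "\<And>p n l x t. l \<in> facesB p n \<Longrightarrow> x \<in> SB n \<Longrightarrow> t \<in> shB p \<Longrightarrow> actB l x \<in> SB p \<and> appB l t \<in> shB n"
    and totc: "\<And>n x. x \<in> SA n \<Longrightarrow> snd (fc n x) \<in> SB (fst (fc n x))"
    and totp: "\<And>n x t. x \<in> SA n \<Longrightarrow> t \<in> shA n \<Longrightarrow> fphi n x t \<in> shB (fst (fc n x))"
    and cont: "\<And>n x. x \<in> SA n \<Longrightarrow> continuous_on (shA n) (fphi n x)"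
    and resp: "\<And>p n l x t. l \<in> facesA p n \<Longrightarrow> x \<in> SA n \<Longrightarrow> t \<in> shA p \<Longrightarrow>
        (F (p, actA l x, t), F (n, x, appA l t)) \<in> grel SB shB facesB actB appB"
    and inj: "\<And>a b. a \<in> real_total SA shA \<Longrightarrow> b \<in> real_total SA shA \<Longrightarrow>
        (F a, F b) \<in> grel SB shB facesB actB appB \<Longrightarrow> (a, b) \<in> grel SA shA facesA actA appA"
    and cover: "\<And>m y. y \<in> SB m \<Longrightarrow> \<exists>K. finite K \<and> (\<forall>(n, x)\<in>K. x \<in> SA n \<and> fc n x = (m, y)) \<and>
        shB m \<subseteq> (\<Union>(n, x)\<in>K. fphi n x ` shA n)"
    and compA: "\<And>n. compact (shA n)"
  shows "realisation SA shA facesA actA appA homeomorphic_space realisation SB shB facesB actB appB"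
proof -
  let ?RA = "grel SA shA facesA actA appA" and ?RB = "grel SB shB facesB actB appB"
  let ?TA = "total_top SA shA" and ?TB = "total_top SB shB"
  let ?QA = "quot_top ?TA ?RA" and ?QB = "quot_top ?TB ?RB"
  have eqA: "equiv UNIV ?RA" and eqB: "equiv UNIV ?RB" by (rule equiv_grel)+
  have clA: "?RA `` topspace ?TA \<subseteq> topspace ?TA" unfolding topspace_total using validA by (rule grel_closed)
  have clB: "?RB `` topspace ?TB \<subseteq> topspace ?TB" unfolding topspace_total using validB by (rule grel_closed)
  have Ftot: "F a \<in> real_total SB shB" if "a \<in> real_total SA shA" for a
    using that totc totp unfolding real_total_def by (auto simp: F_def)
  have respR: "(F a, F b) \<in> ?RB" if "(a, b) \<in> ?RA" for a b
    using that resp eqB by (rule grel_induct_resp)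
  define pA where "pA z = ?RA `` {z}" for z
  define pB where "pB z = ?RB `` {z}" for z
  have pA_eq: "pA a = pA b \<longleftrightarrow> (a, b) \<in> ?RA" for a b
    unfolding pA_def using eqA by (simp add: equiv_class_eq_iff)
  have pB_eq: "pB a = pB b \<longleftrightarrow> (a, b) \<in> ?RB" for a b
    unfolding pB_def using eqB by (simp add: equiv_class_eq_iff)
  have contpA: "continuous_map ?TA ?QA pA" unfolding pA_def using quot_proj_cont[OF eqA clA] .
  have contpB: "continuous_map ?TB ?QB pB" unfolding pB_def using quot_proj_cont[OF eqB clB] .
  define FF where "FF = (\<lambda>U. (pB \<circ> F) (SOME z. z \<in> U))"
  have respF: "(pB \<circ> F) a = (pB \<circ> F) b" if "(a, b) \<in> ?RA" for a b
    using respR[OF that] pB_eq by simp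
  have contFt: "continuous_map ?TA ?QB (pB \<circ> F)"
  proof (rule cont_from_total)
    fix n x assume x: "x \<in> SA n"
    have c1: "continuous_map (top_of_set (shA n)) (top_of_set (shB (fst (fc n x)))) (fphi n x)"
      using cont[OF x] totp[OF x] by auto
    have c2: "continuous_map (top_of_set (shB (fst (fc n x)))) ?TB (\<lambda>t. (fst (fc n x), snd (fc n x), t))"
      using totc[OF x] by (intro cont_into_total)
    have "continuous_map (top_of_set (shA n)) ?QB (pB \<circ> (\<lambda>t. (fst (fc n x), snd (fc n x), t)) \<circ> fphi n x)"
      using c1 c2 contpB by (intro continuous_map_compose) auto
    then show "continuous_map (top_of_set (shA n)) ?QB (\<lambda>t. (pB \<circ> F) (n, x, t))"
      by (simp add: F_def o_def)
  qed
  have contFF: "continuous_map ?QA ?QB FF"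
    unfolding FF_def using quot_induced_cont[OF eqA clA _ contFt] respF by blast
  have FF_val: "FF (pA a) = pB (F a)" if "a \<in> real_total SA shA" for a
    unfolding FF_def pA_def using quot_induced_val[OF eqA, of ?TA "pB \<circ> F"] respF that
    by (simp add: topspace_total)
  define g where "g z = pA (SOME a. a \<in> real_total SA shA \<and> (F a, z) \<in> ?RB)" for z
  define GG where "GG = (\<lambda>V. g (SOME z. z \<in> V))"
  have respg: "g a = g b" if "(a, b) \<in> ?RB" for a b
  proof -
    have "(F c, a) \<in> ?RB \<longleftrightarrow> (F c, b) \<in> ?RB" for c
      using that eqB by (meson equiv_def symE transE)
    then show ?thesis unfolding g_def by simp
  qed
  have g_F: "g (F a) = pA a" if a: "a \<in> real_total SA shA" for a
  proof -
    have ex: "\<exists>a'. a' \<in> real_total SA shA \<and> (F a', F a) \<in> ?RB"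
    proof -
      have "(F a, F a) \<in> ?RB" unfolding grel_def by simp
      then show ?thesis using a by blast
    qed
    let ?a = "SOME a'. a' \<in> real_total SA shA \<and> (F a', F a) \<in> ?RB"
    have "?a \<in> real_total SA shA \<and> (F ?a, F a) \<in> ?RB" using someI_ex[OF ex] .
    then have "(?a, a) \<in> ?RA" using inj a by blast
    then show ?thesis unfolding g_def using pA_eq by simp
  qed
  have contg: "continuous_map ?TB ?QA g"
  proof (rule cont_from_total)
    fix m y assume y: "y \<in> SB m"
    obtain K where K: "finite K" "\<forall>(n, x)\<in>K. x \<in> SA n \<and> fc n x = (m, y)"
      "shB m \<subseteq> (\<Union>(n, x)\<in>K. fphi n x ` shA n)" using cover[OF y] by blast
    let ?P = "\<lambda>(n, x). fphi n x ` shA n"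
    have Psub: "?P i \<subseteq> shB m" if "i \<in> K" for i
    proof -
      obtain n x where i_eq: "i = (n, x)" by (cases i)
      have x: "x \<in> SA n" and fcx: "fc n x = (m, y)" using K(2) that i_eq by auto
      show ?thesis unfolding i_eq using totp[OF x] fcx by auto
    qed
    show "continuous_map (top_of_set (shB m)) ?QA (\<lambda>t. g (m, y, t))"
    proof (rule pasting_lemma_closed[OF K(1), where T = ?P and f = "\<lambda>i t. g (m, y, t)"])
      fix i assume i: "i \<in> K"
      obtain n x where i_eq: "i = (n, x)" by (cases i)
      have x: "x \<in> SA n" and fcx: "fc n x = (m, y)" using K(2) i i_eq by auto
      have cpt: "compact (fphi n x ` shA n)" using compact_continuous_image[OF cont[OF x] compA] .
      then show "closedin (top_of_set (shB m)) (?P i)"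
        using Psub[OF i] i_eq compact_imp_closed[OF cpt] by (simp add: closed_subset)
      have sub: "subtopology (top_of_set (shB m)) (?P i) = top_of_set (fphi n x ` shA n)"
        using Psub[OF i] i_eq by (simp add: subtopology_subtopology Int_absorb1)
      have q: "quotient_map (top_of_set (shA n)) (top_of_set (fphi n x ` shA n)) (fphi n x)"
      proof (rule continuous_imp_quotient_map)
        show "continuous_map (top_of_set (shA n)) (top_of_set (fphi n x ` shA n)) (fphi n x)"
          using cont[OF x] by simp
        show "compact_space (top_of_set (shA n))"
          using compA by (simp add: compact_space_subtopology)
        show "Hausdorff_space (top_of_set (fphi n x ` shA n))"
          by (simp add: Hausdorff_space_subtopology)
      qed simp
      have "continuous_map (top_of_set (shA n)) ?QA (\<lambda>s. pA (n, x, s))"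
        using continuous_map_compose[OF cont_into_total[of x SA n shA] contpA] x by (simp add: o_def)
      then have "continuous_map (top_of_set (shA n)) ?QA ((\<lambda>t. g (m, y, t)) \<circ> fphi n x)"
      proof (rule continuous_map_eq)
        fix s assume "s \<in> topspace (top_of_set (shA n))"
        then have s: "s \<in> shA n" by simp
        have "(m, y, fphi n x s) = F (n, x, s)" by (simp add: F_def fcx)
        then show "pA (n, x, s) = ((\<lambda>t. g (m, y, t)) \<circ> fphi n x) s"
          using g_F[of "(n, x, s)"] x s by (simp add: real_total_def)
      qed
      then show "continuous_map (subtopology (top_of_set (shB m)) (?P i)) ?QA (\<lambda>t. g (m, y, t))"
        unfolding sub using continuous_compose_quotient_map[OF q] by blast
    next
      fix t assume "t \<in> topspace (top_of_set (shB m))"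
      then have "t \<in> shB m" by simp
      then have "t \<in> (\<Union>i\<in>K. ?P i)" using K(3) by (rule subsetD[rotated])
      then obtain j where "j \<in> K" "t \<in> ?P j" by blast
      then show "\<exists>j. j \<in> K \<and> t \<in> ?P j \<and> g (m, y, t) = g (m, y, t)" by blast
    qed auto
  qed
  have contGG: "continuous_map ?QB ?QA GG"
    unfolding GG_def using quot_induced_cont[OF eqB clB _ contg] respg by blast
  have GG_val: "GG (pB z) = g z" if "z \<in> real_total SB shB" for z
    unfolding GG_def pB_def using quot_induced_val[OF eqB, of ?TB g] respg that
    by (simp add: topspace_total)
  have tA: "topspace ?QA = real_total SA shA // ?RA" using topspace_quot[OF eqA clA] topspace_total by metis
  have tB: "topspace ?QB = real_total SB shB // ?RB" using topspace_quot[OF eqB clB] topspace_total by metis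
  have inv1: "GG (FF U) = U" if "U \<in> topspace ?QA" for U
  proof -
    have "U \<in> real_total SA shA // ?RA" using that tA by simp
    then obtain a where a: "a \<in> real_total SA shA" "U = pA a" unfolding quotient_def pA_def by blast
    show ?thesis using a FF_val GG_val Ftot g_F by simp
  qed
  have inv2: "FF (GG V) = V" if "V \<in> topspace ?QB" for V
  proof -
    have "V \<in> real_total SB shB // ?RB" using that tB by simp
    then obtain z where z: "z \<in> real_total SB shB" "V = pB z" unfolding quotient_def pB_def by blast
    obtain m y u where zz: "z = (m, y, u)" "y \<in> SB m" "u \<in> shB m" using z(1) unfolding real_total_def by auto
    obtain K where K: "finite K" "\<forall>(n, x)\<in>K. x \<in> SA n \<and> fc n x = (m, y)"
      "shB m \<subseteq> (\<Union>(n, x)\<in>K. fphi n x ` shA n)" using cover[OF zz(2)] by blast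
    then obtain n x s where nxs: "(n, x) \<in> K" "s \<in> shA n" "u = fphi n x s" using zz(3) by blast
    have x: "x \<in> SA n" "fc n x = (m, y)" using K(2) nxs(1) by auto
    have zF: "z = F (n, x, s)" using zz nxs x by (simp add: F_def)
    have ain: "(n, x, s) \<in> real_total SA shA" using x nxs by (simp add: real_total_def)
    show ?thesis using z zF GG_val g_F[OF ain] FF_val[OF ain] by simp
  qed
  have "homeomorphic_maps ?QA ?QB FF GG"
    unfolding homeomorphic_maps_def using contFF contGG inv1 inv2 by blast
  then show ?thesis unfolding realisation_grel homeomorphic_space_def by blast
qed


lemma fdim_Nil[simp]: "fdim [] = 0" by (simp add: fdim_def)
lemma fdim_None[simp]: "fdim (None # l) = Suc (fdim l)" by (simp add: fdim_def)
lemma fdim_Some[simp]: "fdim (Some c # l) = fdim l" by (simp add: fdim_def)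
lemma fdim_Cons: "fdim (a # l) = (if a = None then Suc (fdim l) else fdim l)" by (simp add: fdim_def)
lemma fdim_le: "fdim l \<le> length l" by (simp add: fdim_def)
lemma fdim_append[simp]: "fdim (l @ m) = fdim l + fdim m" by (simp add: fdim_def)
lemma fdim_replicate_None[simp]: "fdim (replicate n None) = n" by (induction n) auto

lemma fcomp_Nil2: "fcomp (None # ls) [] = None # fcomp ls []" by simp
lemma fcomp_None_Cons[simp]: "fcomp (None # ls) (m # ms) = m # fcomp ls ms" by simp

lemma length_fcomp[simp]: "length (fcomp l m) = length l"
  by (induction l m rule: fcomp.induct) (auto split: list.splits)

lemma fdim_fcomp: "length m = fdim l \<Longrightarrow> fdim (fcomp l m) = fdim m"
  by (induction l m rule: fcomp.induct) (auto split: list.splits simp: fdim_Cons)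

lemma fcomp_assoc: "length m = fdim l \<Longrightarrow> fcomp (fcomp l m) r = fcomp l (fcomp m r)"
proof (induction l m arbitrary: r rule: fcomp.induct)
  case (3 ls ms)
  then show ?case
  proof (cases ms)
    case (Cons a ms')
    then show ?thesis using 3 by (cases a; cases r) auto
  qed simp
qed auto

lemma fcomp_id_left: "length m = n \<Longrightarrow> fcomp (replicate n None) m = m"
  by (induction n arbitrary: m) (auto simp: length_Suc_conv)

lemma fcomp_id_right: "fcomp l (replicate (fdim l) None) = l"
proof (induction l)
  case (Cons a l) then show ?case by (cases a) auto
qed simp

lemma fcomp_cancel: "length m = fdim l \<Longrightarrow> length m' = fdim l \<Longrightarrow> fcomp l m = fcomp l m' \<Longrightarrow> m = m'"
proof (induction l arbitrary: m m')
  case (Cons a l)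
  show ?case
  proof (cases a)
    case None
    then obtain b ms b' ms' where "m = b # ms" "m' = b' # ms'" using Cons.prems by (cases m; cases m') auto
    then show ?thesis using Cons None by auto
  next
    case (Some c) then show ?thesis using Cons by auto
  qed
qed simp

lemma fappf_beyond: "i \<ge> length l \<Longrightarrow> fappf l v t i = 0"
proof (induction l arbitrary: t i)
  case (Cons a l) then show ?case by (cases a) auto
qed simp

lemma fappf_shift_None: "(\<lambda>j. fappf (None # l) v t (Suc j)) = fappf l v (\<lambda>j. t (Suc j))"
  by simp
lemma fappf_shift_Some: "(\<lambda>j. fappf (Some c # l) v t (Suc j)) = fappf l v t"
  by simp

lemma fappf_fcomp: "length m = fdim l \<Longrightarrow> fappf (fcomp l m) v t = fappf l v (fappf m v t)"
proof (induction l arbitrary: m t)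
  case Nil then show ?case by simp
next
  case (Cons a ls)
  show ?case
  proof (cases a)
    case (Some c)
    then show ?thesis using Cons by (simp add: fun_eq_iff)
  next
    case None
    then obtain b ms where m: "m = b # ms" using Cons.prems by (cases m) auto
    show ?thesis
    proof (cases b)
      case None
      have "fappf (fcomp ls ms) v (\<lambda>j. t (Suc j)) = fappf ls v (fappf ms v (\<lambda>j. t (Suc j)))"
        using Cons m \<open>a = None\<close> by simp
      then show ?thesis using m None \<open>a = None\<close> by (simp add: fun_eq_iff del: fappf.simps(3) add: fappf.simps(3)[of ms] fappf.simps(3)[of "fcomp ls ms"] fappf.simps(3)[of ls] fappf_shift_None)
    next
      case (Some c)
      have "fappf (fcomp ls ms) v t = fappf ls v (fappf ms v t)"
        using Cons m \<open>a = None\<close> by simp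
      then show ?thesis using m Some \<open>a = None\<close> by (simp add: fun_eq_iff)
    qed
  qed
qed

lemma fappf_None_0[simp]: "fappf (None # l) v t 0 = t 0" by simp
lemma fappf_None_Suc[simp]: "fappf (None # l) v t (Suc i) = fappf l v (\<lambda>j. t (Suc j)) i" by simp
lemma fappf_Some_0[simp]: "fappf (Some c # l) v t 0 = v c" by simp
lemma fappf_Some_Suc[simp]: "fappf (Some c # l) v t (Suc i) = fappf l v t i" by simp
declare fappf.simps(2,3)[simp del]

primrec fpt :: "(real \<Rightarrow> 'c option) \<Rightarrow> nat \<Rightarrow> (nat \<Rightarrow> real) \<Rightarrow> 'c option list" where
  "fpt dec 0 t = []"
| "fpt dec (Suc N) t = dec (t 0) # fpt dec N (\<lambda>j. t (Suc j))"

primrec strp :: "(real \<Rightarrow> 'c option) \<Rightarrow> nat \<Rightarrow> (nat \<Rightarrow> real) \<Rightarrow> (nat \<Rightarrow> real)" where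
  "strp dec 0 t = (\<lambda>_. 0)"
| "strp dec (Suc N) t = (case dec (t 0) of
      None \<Rightarrow> (\<lambda>j. if j = 0 then t 0 else strp dec N (\<lambda>j. t (Suc j)) (j - 1))
    | Some _ \<Rightarrow> strp dec N (\<lambda>j. t (Suc j)))"

lemma length_fpt[simp]: "length (fpt dec N t) = N"
  by (induction N arbitrary: t) auto

lemma fappf_fpt_strp:
  assumes dv: "\<And>c r. dec r = Some c \<Longrightarrow> v c = r"
  shows "(\<forall>i\<ge>N. t i = 0) \<Longrightarrow> fappf (fpt dec N t) v (strp dec N t) = t"
proof (induction N arbitrary: t)
  case 0 then show ?case by (auto simp: fun_eq_iff)
next
  case (Suc N)
  have IH: "fappf (fpt dec N (\<lambda>j. t (Suc j))) v (strp dec N (\<lambda>j. t (Suc j))) = (\<lambda>j. t (Suc j))"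
    using Suc by auto
  show ?case
  proof (cases "dec (t 0)")
    case None
    show ?thesis
    proof (rule ext)
      fix i show "fappf (fpt dec (Suc N) t) v (strp dec (Suc N) t) i = t i"
        using None IH by (cases i) (auto simp: fun_eq_iff)
    qed
  next
    case (Some c)
    show ?thesis
    proof (rule ext)
      fix i show "fappf (fpt dec (Suc N) t) v (strp dec (Suc N) t) i = t i"
        using Some IH dv[OF Some] by (cases i) (auto simp: fun_eq_iff)
    qed
  qed
qed

lemma fpt_fappf:
  assumes vd: "\<And>c. dec (v c) = Some c"
  shows "fpt dec (length l) (fappf l v t) = fcomp l (fpt dec (fdim l) t)"
proof (induction l arbitrary: t)
  case Nil then show ?case by simp
next
  case (Cons a l)
  then show ?case
  proof (cases a)
    case None
    have "fpt dec (length l) (fappf l v (\<lambda>j. t (Suc j))) = fcomp l (fpt dec (fdim l) (\<lambda>j. t (Suc j)))"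
      using Cons by simp
    then show ?thesis using None by (simp del: fpt.simps add: fpt.simps(2)[of dec "length l"] fpt.simps(2)[of dec "fdim l"])
  next
    case (Some c)
    then show ?thesis using Cons vd by simp
  qed
qed

lemma strp_fappf:
  assumes vd: "\<And>c. dec (v c) = Some c"
  shows "strp dec (length l) (fappf l v t) = strp dec (fdim l) t"
proof (induction l arbitrary: t)
  case Nil then show ?case by simp
next
  case (Cons a l)
  then show ?case
  proof (cases a)
    case None
    have "strp dec (length l) (fappf l v (\<lambda>j. t (Suc j))) = strp dec (fdim l) (\<lambda>j. t (Suc j))"
      using Cons by simp
    then show ?thesis using None by (simp split: option.splits add: fun_eq_iff)
  next
    case (Some c)
    then show ?thesis using Cons vd by simp
  qed
qed

lemma strp_interior: "j < fdim (fpt dec N t) \<Longrightarrow> dec (strp dec N t j) = None"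
proof (induction N arbitrary: t j)
  case 0 then show ?case by simp
next
  case (Suc N)
  then show ?case by (cases "dec (t 0)"; cases j) auto
qed

lemma strp_beyond: "j \<ge> fdim (fpt dec N t) \<Longrightarrow> strp dec N t j = 0"
proof (induction N arbitrary: t j)
  case 0 then show ?case by simp
next
  case (Suc N)
  then show ?case by (cases "dec (t 0)"; cases j) auto
qed

lemma strp_values: "(\<And>i. i < N \<Longrightarrow> P (t i)) \<Longrightarrow> j < fdim (fpt dec N t) \<Longrightarrow> P (strp dec N t j)"
proof (induction N arbitrary: t j)
  case 0 then show ?case by simp
next
  case (Suc N)
  then show ?case by (cases "dec (t 0)"; cases j) auto
qed

lemma strp_sum:
  assumes "\<And>r c. dec r = Some c \<Longrightarrow> r = 0"
  shows "(\<Sum>j<fdim (fpt dec N t). strp dec N t j) = (\<Sum>i<N. t i)"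
proof (induction N arbitrary: t)
  case 0 then show ?case by simp
next
  case (Suc N)
  show ?case
  proof (cases "dec (t 0)")
    case None
    then show ?thesis using Suc[of "\<lambda>j. t (Suc j)"] by (simp del: sum.lessThan_Suc add: sum.lessThan_Suc_shift)
  next
    case (Some c)
    then show ?thesis using Suc[of "\<lambda>j. t (Suc j)"] assms[OF Some] by (simp del: sum.lessThan_Suc add: sum.lessThan_Suc_shift)
  qed
qed

lemma fpt_interior: "(\<And>i. i < N \<Longrightarrow> dec (t i) = None) \<Longrightarrow> fpt dec N t = replicate N None"
  by (induction N arbitrary: t) auto

lemma strp_interior_id: "(\<And>i. i < N \<Longrightarrow> dec (t i) = None) \<Longrightarrow> (\<forall>i\<ge>N. t i = 0) \<Longrightarrow> strp dec N t = t"
proof (induction N arbitrary: t)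
  case 0 then show ?case by auto
next
  case (Suc N)
  have "strp dec N (\<lambda>j. t (Suc j)) = (\<lambda>j. t (Suc j))" using Suc by auto
  then show ?case using Suc.prems(1)[of 0] by (auto simp: fun_eq_iff split: nat.splits)
qed

lemma fappf_values: "(\<And>c. P (v c)) \<Longrightarrow> (\<And>j. j < fdim l \<Longrightarrow> P (t j)) \<Longrightarrow> i < length l \<Longrightarrow> P (fappf l v t i)"
proof (induction l arbitrary: t i)
  case Nil then show ?case by simp
next
  case (Cons a l)
  then show ?case by (cases a; cases i) auto
qed

lemma fappf_sum0: "(\<Sum>i<length l. fappf l (\<lambda>_. 0) t i) = (\<Sum>j<fdim l. t j)"
proof (induction l arbitrary: t)
  case Nil then show ?case by simp
next
  case (Cons a l)
  then show ?case by (cases a) (auto simp del: sum.lessThan_Suc simp add: sum.lessThan_Suc_shift)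
qed

lemma fappf_scale0: "fappf l (\<lambda>_. 0) (\<lambda>j. r * t j) = (\<lambda>i. r * fappf l (\<lambda>_. 0) t i)"
proof (induction l arbitrary: t)
  case Nil then show ?case by simp
next
  case (Cons a l)
  show ?case
  proof (rule ext)
    fix i show "fappf (a # l) (\<lambda>_. 0) (\<lambda>j. r * t j) i = r * fappf (a # l) (\<lambda>_. 0) t i"
      using Cons.IH[of "\<lambda>j. t (Suc j)"] Cons.IH[of t] by (cases a; cases i) (auto simp: fun_eq_iff)
  qed
qed

lemma sval_0: "sval = (\<lambda>_. 0)" by (simp add: fun_eq_iff sval_def)


definition dec_c :: "real \<Rightarrow> bool option" where
  "dec_c r = (if r = 0 then Some False else if r = 1 then Some True else None)"
definition dec_s :: "real \<Rightarrow> unit option" where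
  "dec_s r = (if r = 0 then Some () else None)"

lemma dec_c_v: "dec_c r = Some c \<Longrightarrow> cval c = r"
  by (auto simp: dec_c_def cval_def split: if_splits)
lemma dec_c_v2: "dec_c (cval c) = Some c"
  by (cases c) (auto simp: dec_c_def cval_def)
lemma dec_s_v: "dec_s r = Some c \<Longrightarrow> sval c = r"
  by (auto simp: dec_s_def sval_def split: if_splits)
lemma dec_s_v2: "dec_s (sval c) = Some c"
  by (auto simp: dec_s_def sval_def)
lemma dec_s_0: "dec_s r = Some c \<Longrightarrow> r = 0"
  by (auto simp: dec_s_def split: if_splits)
lemma dec_c_None: "dec_c r = None \<longleftrightarrow> r \<noteq> 0 \<and> r \<noteq> 1"
  by (auto simp: dec_c_def)
lemma dec_s_None: "dec_s r = None \<longleftrightarrow> r \<noteq> 0"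
  by (auto simp: dec_s_def)

lemma fappf_cube:
  assumes l: "l \<in> cface p n" and t: "t \<in> std_cube p"
  shows "fappf l cval t \<in> std_cube n"
proof -
  have "0 \<le> fappf l cval t i \<and> fappf l cval t i \<le> 1" if "i < n" for i
    using l t that by (intro fappf_values[where P = "\<lambda>r. 0 \<le> r \<and> r \<le> 1"])
      (auto simp: cval_def faces_of_def std_cube_def)
  moreover have "fappf l cval t i = 0" if "i \<ge> n" for i
    using l that by (intro fappf_beyond) (auto simp: faces_of_def)
  ultimately show ?thesis unfolding std_cube_def by auto
qed

lemma fappf_simplex:
  assumes l: "l \<in> sface p n" and t: "t \<in> std_simplex p"
  shows "fappf l sval t \<in> std_simplex n"
proof -
  have "0 \<le> fappf l sval t i" if "i \<le> n" for i
    using l t that by (intro fappf_values[where P = "\<lambda>r. 0 \<le> r"])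
      (auto simp: sval_def faces_of_def std_simplex_def)
  moreover have "fappf l sval t i = 0" if "i > n" for i
    using l that by (intro fappf_beyond) (auto simp: faces_of_def)
  moreover have "(\<Sum>i\<le>n. fappf l sval t i) = 1"
  proof -
    have "(\<Sum>i\<le>n. fappf l sval t i) = (\<Sum>i<length l. fappf l sval t i)"
      using l by (simp add: faces_of_def lessThan_Suc_atMost[symmetric])
    also have "\<dots> = (\<Sum>j<fdim l. t j)" unfolding sval_0 by (rule fappf_sum0)
    also have "\<dots> = (\<Sum>j\<le>p. t j)" using l by (simp add: faces_of_def lessThan_Suc_atMost[symmetric])
    finally show ?thesis using t by (simp add: std_simplex_def)
  qed
  ultimately show ?thesis unfolding std_simplex_def by auto
qed

lemma strip_cube:
  assumes t: "t \<in> std_cube n"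
  shows "fpt dec_c n t \<in> cface (fdim (fpt dec_c n t)) n"
    "strp dec_c n t \<in> std_cube (fdim (fpt dec_c n t))"
proof -
  show "fpt dec_c n t \<in> cface (fdim (fpt dec_c n t)) n" by (simp add: faces_of_def)
  have "0 \<le> strp dec_c n t j \<and> strp dec_c n t j \<le> 1" if "j < fdim (fpt dec_c n t)" for j
    using t that by (intro strp_values[where P = "\<lambda>r. 0 \<le> r \<and> r \<le> 1"]) (auto simp: std_cube_def)
  then show "strp dec_c n t \<in> std_cube (fdim (fpt dec_c n t))"
    unfolding std_cube_def using strp_beyond by auto
qed

lemma strip_simplex:
  assumes t: "t \<in> std_simplex n"
  shows "1 \<le> fdim (fpt dec_s (n+1) t)"
    "fpt dec_s (n+1) t \<in> sface (fdim (fpt dec_s (n+1) t) - 1) n"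
    "strp dec_s (n+1) t \<in> std_simplex (fdim (fpt dec_s (n+1) t) - 1)"
proof -
  define L where "L = fpt dec_s (n+1) t"
  define u where "u = strp dec_s (n+1) t"
  have sum: "(\<Sum>j<fdim L. u j) = 1"
    unfolding L_def u_def using strp_sum[of dec_s "n+1" t] dec_s_0 t
    by (simp add: std_simplex_def lessThan_Suc_atMost del: strp.simps fpt.simps)
  then show ge: "1 \<le> fdim (fpt dec_s (n+1) t)" unfolding L_def[symmetric] by (cases "fdim L") auto
  then show "fpt dec_s (n+1) t \<in> sface (fdim (fpt dec_s (n+1) t) - 1) n" by (simp add: faces_of_def del: fpt.simps)
  have "0 \<le> u j" if "j < fdim L" for j
    using t that unfolding u_def L_def by (intro strp_values[where P = "\<lambda>r. 0 \<le> r"]) (auto simp: std_simplex_def)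
  moreover have "(\<Sum>j\<le>fdim L - 1. u j) = 1"
    using sum ge unfolding L_def[symmetric] by (metis Suc_diff_1 lessThan_Suc_atMost less_le_trans zero_less_one)
  moreover have "u j = 0" if "j > fdim L - 1" for j
    using that ge unfolding u_def L_def by (intro strp_beyond) simp
  ultimately have "u \<in> std_simplex (fdim L - 1)"
    unfolding std_simplex_def using ge unfolding L_def[symmetric] by auto
  then show "strp dec_s (n+1) t \<in> std_simplex (fdim (fpt dec_s (n+1) t) - 1)" unfolding u_def L_def .
qed

definition canon :: "nat \<Rightarrow> (real \<Rightarrow> 'c option) \<Rightarrow> ('c option list \<Rightarrow> 'a \<Rightarrow> 'a)
    \<Rightarrow> nat \<times> 'a \<times> (nat \<Rightarrow> real) \<Rightarrow> nat \<times> 'a \<times> (nat \<Rightarrow> real)" where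
  "canon k dec act z = (case z of (n, x, t) \<Rightarrow>
     (fdim (fpt dec (n + k) t) - k, act (fpt dec (n + k) t) x, strp dec (n + k) t))"

lemma canon_gen:
  assumes ps: "presheaf k S act" and vd: "\<And>c. dec (v c) = Some c"
    and shp: "\<And>p t. t \<in> shape p \<Longrightarrow> k \<le> fdim (fpt dec (p + k) t)"
    and l: "l \<in> faces_of k p n" and x: "x \<in> S n" and t: "t \<in> shape p"
  shows "canon k dec act (p, act l x, t) = canon k dec act (n, x, fappf l v t)"
proof -
  let ?L = "fpt dec (p + k) t"
  have len: "length l = n + k" "fdim l = p + k" using l by (auto simp: faces_of_def)
  have e1: "fpt dec (n + k) (fappf l v t) = fcomp l ?L"
    using fpt_fappf[OF vd, of l t] len by simp
  have e2: "strp dec (n + k) (fappf l v t) = strp dec (p + k) t"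
    using strp_fappf[OF vd, of l t] len by simp
  have e3: "fdim (fcomp l ?L) = fdim ?L" using len by (simp add: fdim_fcomp)
  have Lf: "?L \<in> faces_of k (fdim ?L - k) p" using shp[OF t] by (simp add: faces_of_def)
  have e4: "act (fcomp l ?L) x = act ?L (act l x)"
    using ps l Lf x unfolding presheaf_def by blast
  show ?thesis unfolding canon_def using e1 e2 e3 e4 by simp
qed

lemma canon_rel:
  assumes ps: "presheaf k S act" and vd: "\<And>c. dec (v c) = Some c"
    and shp: "\<And>p t. t \<in> shape p \<Longrightarrow> k \<le> fdim (fpt dec (p + k) t)"
    and r: "(a, b) \<in> grel S shape (faces_of k) act (\<lambda>l. fappf l v)"
  shows "canon k dec act a = canon k dec act b"
proof -
  have "(canon k dec act a, canon k dec act b) \<in> Id"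
    using r by (rule grel_induct_resp) (auto intro: canon_gen[OF ps vd shp] simp: equiv_def refl_on_def sym_def trans_def)
  then show ?thesis by simp
qed

lemma canon_interior:
  assumes ps: "presheaf k S act" and x: "x \<in> S n"
    and int: "\<And>i. i < n + k \<Longrightarrow> dec (t i) = None" and van: "\<forall>i\<ge>n + k. t i = 0"
  shows "canon k dec act (n, x, t) = (n, x, t)"
proof -
  have "fpt dec (n + k) t = replicate (n + k) None" using int by (rule fpt_interior)
  moreover have "strp dec (n + k) t = t" using int van by (rule strp_interior_id)
  moreover have "act (replicate (n + k) None) x = x" using ps x unfolding presheaf_def by blast
  ultimately show ?thesis unfolding canon_def by simp
qed

lemma strip_rel:
  assumes dv: "\<And>c r. dec r = Some c \<Longrightarrow> v c = r"
    and lf: "fpt dec (n + k) t \<in> faces_of k (fdim (fpt dec (n + k) t) - k) n"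
    and sh: "strp dec (n + k) t \<in> shape (fdim (fpt dec (n + k) t) - k)"
    and x: "x \<in> S n" and van: "\<forall>i\<ge>n + k. t i = 0"
  shows "((fdim (fpt dec (n + k) t) - k, act (fpt dec (n + k) t) x, strp dec (n + k) t), (n, x, t))
           \<in> grel S shape (faces_of k) act (\<lambda>l. fappf l v)"
  using grel_gen[where l = "fpt dec (n + k) t" and faces = "faces_of k" and p = "fdim (fpt dec (n + k) t) - k"
     and n = n and x = x and S = S and t = "strp dec (n + k) t" and shape = shape and act = act and app = "\<lambda>l. fappf l v", OF lf x sh]
    fappf_fpt_strp[where dec = dec and v = v and N = "n + k" and t = t] dv van by simp


lemma std_cube_PiE: "std_cube n = PiE UNIV (\<lambda>i. if i < n then {0..1} else {0})"
  unfolding std_cube_def PiE_def Pi_def extensional_def by (auto simp: not_less)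

lemma compact_std_cube: "compact (std_cube n)"
proof -
  have "compactin (product_topology (\<lambda>_. euclidean) UNIV) (PiE UNIV (\<lambda>i. if i < n then {0..1::real} else {0}))"
    unfolding compactin_PiE by auto
  then show ?thesis unfolding std_cube_PiE euclidean_product_topology by simp
qed

lemma cont_coord_shift: "continuous_on UNIV (\<lambda>t::nat\<Rightarrow>real. \<lambda>j. t (Suc j))"
  by (intro continuous_on_coordinatewise_then_product continuous_on_product_coordinates)

lemma cont_fappf_coord: "continuous_on UNIV (\<lambda>t. fappf l v t i)"
proof (induction l arbitrary: i)
  case Nil then show ?case by simp
next
  case (Cons a l)
  show ?case
  proof (cases a)
    case None
    show ?thesis
    proof (cases i)
      case 0 then show ?thesis using None by simp
    next
      case (Suc i')
      have "continuous_on UNIV ((\<lambda>t. fappf l v t i') \<circ> (\<lambda>t. \<lambda>j. t (Suc j)))"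
        using Cons.IH cont_coord_shift by (intro continuous_on_compose) (auto intro: continuous_on_subset)
      then show ?thesis using None Suc by (simp add: o_def)
    qed
  next
    case (Some c)
    then show ?thesis using Cons.IH by (cases i) auto
  qed
qed

lemma cont_fappf: "continuous_on UNIV (fappf l v)"
  by (intro continuous_on_coordinatewise_then_product cont_fappf_coord)

lemma closed_std_simplex_aux: "std_simplex n = std_cube (Suc n) \<inter> {t. (\<Sum>i\<le>n. t i) = 1}"
proof -
  have "t i \<le> 1" if "\<forall>i\<le>n. 0 \<le> t i" "(\<Sum>i\<le>n. t i) = 1" "i \<le> n" for t :: "nat \<Rightarrow> real" and i
  proof -
    have "t i \<le> (\<Sum>i\<le>n. t i)" using that by (intro member_le_sum) auto
    then show ?thesis using that by simp
  qed
  then show ?thesis unfolding std_simplex_def std_cube_def by (auto simp: less_Suc_eq_le not_le)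
qed

lemma compact_std_simplex: "compact (std_simplex n)"
proof -
  have "closed {t::nat\<Rightarrow>real. (\<Sum>i\<le>n. t i) = 1}"
    by (intro closed_Collect_eq continuous_intros continuous_on_product_coordinates)
  then show ?thesis unfolding closed_std_simplex_aux using compact_std_cube
    by (intro compact_Int_closed)
qed


lemma fappf_nth_Some: "i < length l \<Longrightarrow> l ! i = Some c \<Longrightarrow> fappf l v t i = v c"
proof (induction l arbitrary: i t)
  case Nil then show ?case by simp
next
  case (Cons a l) then show ?case by (cases a; cases i) auto
qed

lemma fappf_values': "(\<And>c. Some c \<in> set l \<Longrightarrow> P (v c)) \<Longrightarrow> (\<And>j. j < fdim l \<Longrightarrow> P (t j)) \<Longrightarrow> i < length l \<Longrightarrow> P (fappf l v t i)"
proof (induction l arbitrary: t i)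
  case Nil then show ?case by simp
next
  case (Cons a l)
  then show ?case by (cases a; cases i) auto
qed

lemma fdim_less_length: "fdim l < length l \<longleftrightarrow> (\<exists>c. Some c \<in> set l)"
proof (induction l)
  case Nil then show ?case by simp
next
  case (Cons a l) then show ?case using fdim_le[of l] by (cases a) auto
qed

lemma Some_in_fcomp: "Some c \<in> set l \<Longrightarrow> Some c \<in> set (fcomp l m)"
proof (induction l m rule: fcomp.induct)
  case (3 ls ms) then show ?case by (auto split: list.splits)
qed auto

lemma fcomp_front_back: "fcomp (front_part nu) (back_part nu) = nu"
proof (induction nu)
  case Nil then show ?case by (simp add: front_part_def back_part_def)
next
  case (Cons a nu) then show ?case by (auto simp: front_part_def back_part_def)
qed

lemma length_front[simp]: "length (front_part nu) = length nu" by (simp add: front_part_def)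
lemma fdim_front: "fdim (front_part nu) = length (back_part nu)"
  by (induction nu) (auto simp: front_part_def back_part_def)
lemma fdim_back: "fdim (back_part nu) = fdim nu"
  by (induction nu) (auto simp: back_part_def fdim_Cons)
lemma length_restr[simp]: "length (restr l) = length l" by (simp add: restr_def)
lemma fdim_restr[simp]: "fdim (restr l) = fdim l"
  by (induction l) (auto simp: restr_def fdim_Cons)
lemma back_no_False: "Some False \<notin> set (back_part nu)" by (simp add: back_part_def)
lemma back_Some: "Some c \<in> set nu \<Longrightarrow> c = True \<Longrightarrow> Some c \<in> set (back_part nu)"
  by (simp add: back_part_def)

lemma cval_False: "cval False = 0" by (simp add: cval_def)

lemma fappf_front_restr: "fappf (front_part nu) cval u = fappf (restr (front_part nu)) sval u"
proof (induction nu arbitrary: u)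
  case Nil then show ?case by (simp add: front_part_def restr_def)
next
  case (Cons a nu)
  show ?case
  proof (rule ext)
    fix i
    show "fappf (front_part (a # nu)) cval u i = fappf (restr (front_part (a # nu))) sval u i"
      using Cons.IH[of u] Cons.IH[of "\<lambda>j. u (Suc j)"]
      by (cases i; cases "a = Some False") (auto simp: front_part_def restr_def cval_False sval_0 fun_eq_iff)
  qed
qed

lemma sd_box_valid:
  assumes X: "delta_set X d" and l: "l \<in> cface p k" and xl: "xl \<in> sd_box X k"
  shows "sd_box_act d l xl \<in> sd_box X p"
proof -
  obtain x L where xl_eq: "xl = (x, L)" by (cases xl)
  have L: "L \<in> back_face k (length L)" "k < length L" "x \<in> X (length L - 1)"
    using xl unfolding xl_eq sd_box_def by auto
  have lenl: "length l = k" "fdim l = p" using l by (auto simp: faces_of_def)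
  have fL: "fdim L = k" using L(1) by (simp add: back_face_def faces_of_def)
  define nu where "nu = fcomp L l"
  have fnu: "fdim nu = p" unfolding nu_def using lenl fL by (simp add: fdim_fcomp)
  have lnu: "length nu = length L" unfolding nu_def by simp
  obtain c where c: "Some c \<in> set L" using L(2) fL fdim_less_length by fastforce
  have cT: "c = True" using c L(1) by (cases c) (auto simp: back_face_def)
  have "Some True \<in> set (back_part nu)" using Some_in_fcomp[OF c, of l] cT unfolding nu_def
    by (intro back_Some) auto
  then have lt: "p < length (back_part nu)" using fdim_less_length[of "back_part nu"] fdim_back[of nu] fnu by auto
  have bf: "back_part nu \<in> back_face p (length (back_part nu))"
    using back_no_False[of nu] fdim_back[of nu] fnu unfolding back_face_def faces_of_def by auto
  have rf: "restr (front_part nu) \<in> sface (length (back_part nu) - 1) (length L - 1)"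
  proof -
    have "length L = Suc (length L - 1)" "length (back_part nu) = Suc (length (back_part nu) - 1)"
      using lt L(2) by arith+
    then show ?thesis using lnu by (simp add: faces_of_def fdim_front)
  qed
  have "d (restr (front_part nu)) x \<in> X (length (back_part nu) - 1)"
    using X rf L(3) unfolding delta_set_def presheaf_def by blast
  then show ?thesis using bf lt unfolding xl_eq sd_box_act_def sd_box_def Let_def nu_def by simp
qed

lemma restr_front_face:
  assumes L: "L \<in> back_face k (length L)" "k < length L" and l: "l \<in> cface p k"
  shows "restr (front_part (fcomp L l)) \<in> sface (length (back_part (fcomp L l)) - 1) (length L - 1)"
    "back_part (fcomp L l) \<in> back_face p (length (back_part (fcomp L l)))"
    "p < length (back_part (fcomp L l))"
proof -
  have lenl: "length l = k" "fdim l = p" using l by (auto simp: faces_of_def)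
  have fL: "fdim L = k" using L(1) by (simp add: back_face_def faces_of_def)
  define nu where "nu = fcomp L l"
  have fnu: "fdim nu = p" unfolding nu_def using lenl fL by (simp add: fdim_fcomp)
  have lnu: "length nu = length L" unfolding nu_def by simp
  obtain c where c: "Some c \<in> set L" using L(2) fL fdim_less_length by fastforce
  have cT: "c = True" using c L(1) by (cases c) (auto simp: back_face_def)
  have "Some True \<in> set (back_part nu)" using Some_in_fcomp[OF c, of l] cT unfolding nu_def
    by (intro back_Some) auto
  then have lt: "p < length (back_part nu)" using fdim_less_length[of "back_part nu"] fdim_back[of nu] fnu by auto
  then show "p < length (back_part (fcomp L l))" unfolding nu_def .
  show "back_part (fcomp L l) \<in> back_face p (length (back_part (fcomp L l)))"
    using back_no_False[of nu] fdim_back[of nu] fnu unfolding back_face_def faces_of_def nu_def by auto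
  have "length L = Suc (length L - 1)" "length (back_part nu) = Suc (length (back_part nu) - 1)"
    using lt L(2) by arith+
  then show "restr (front_part (fcomp L l)) \<in> sface (length (back_part (fcomp L l)) - 1) (length L - 1)"
    using lnu unfolding nu_def by (simp add: faces_of_def fdim_front)
qed

definition nrm :: "nat \<Rightarrow> (nat \<Rightarrow> real) \<Rightarrow> nat \<Rightarrow> real" where
  "nrm N u = (\<lambda>i. u i / (\<Sum>j<N. u j))"

lemma back_cube_props:
  assumes L: "L \<in> back_face k (length L)" "k < length L" and t: "t \<in> std_cube k"
  shows "\<exists>i<length L. fappf L cval t i = 1"
    "0 \<le> fappf L cval t i" "fappf L cval t i \<le> 1"
    "1 \<le> (\<Sum>j<length L. fappf L cval t j)"
proof -
  have fL: "fdim L = k" using L(1) by (simp add: back_face_def faces_of_def)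
  obtain c where c: "Some c \<in> set L" using L(2) fL fdim_less_length by fastforce
  have cT: "c = True" using c L(1) by (cases c) (auto simp: back_face_def)
  obtain i0 where i0: "i0 < length L" "L ! i0 = Some True" using c cT by (auto simp: in_set_conv_nth)
  have one: "fappf L cval t i0 = 1" using fappf_nth_Some[OF i0] by (simp add: cval_def)
  then show "\<exists>i<length L. fappf L cval t i = 1" using i0 by blast
  have b: "0 \<le> fappf L cval t i \<and> fappf L cval t i \<le> 1" for i
  proof (cases "i < length L")
    case True
    show ?thesis using t fL True
      by (intro fappf_values'[where P = "\<lambda>r. 0 \<le> r \<and> r \<le> 1"]) (auto simp: cval_def std_cube_def)
  qed (simp add: fappf_beyond)
  then show "0 \<le> fappf L cval t i" "fappf L cval t i \<le> 1" by auto
  have "fappf L cval t i0 \<le> (\<Sum>j<length L. fappf L cval t j)"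
    using i0 b by (intro member_le_sum) auto
  then show "1 \<le> (\<Sum>j<length L. fappf L cval t j)" using one by simp
qed

lemma totp1:
  assumes xl: "(x, L) \<in> sd_box X k" and t: "t \<in> std_cube k"
  shows "nrm (length L) (fappf L cval t) \<in> std_simplex (length L - 1)"
proof -
  have L: "L \<in> back_face k (length L)" "k < length L" using xl by (auto simp: sd_box_def)
  define u where "u = fappf L cval t"
  define S where "S = (\<Sum>j<length L. u j)"
  have S1: "1 \<le> S" unfolding S_def u_def using back_cube_props(4)[OF L t] .
  have u0: "0 \<le> u i" for i unfolding u_def using back_cube_props(2)[OF L t] .
  have ii: "{..length L - 1} = {..<length L}" using L(2) by auto
  have "(\<Sum>i\<le>length L - 1. u i / S) = (\<Sum>i<length L. u i) / S"
    unfolding ii by (simp add: sum_divide_distrib)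
  also have "\<dots> = 1" using S1 unfolding S_def by simp
  finally have "(\<Sum>i\<le>length L - 1. u i / S) = 1" .
  moreover have "u i = 0" if "i > length L - 1" for i
    unfolding u_def using that L(2) by (intro fappf_beyond) simp
  ultimately show ?thesis unfolding std_simplex_def nrm_def u_def[symmetric] S_def[symmetric]
    using u0 S1 by auto
qed

lemma cont1:
  assumes xl: "(x, L) \<in> sd_box X k"
  shows "continuous_on (std_cube k) (\<lambda>t. nrm (length L) (fappf L cval t))"
proof -
  have L: "L \<in> back_face k (length L)" "k < length L" using xl by (auto simp: sd_box_def)
  have c: "continuous_on (std_cube k) (\<lambda>t. fappf L cval t i)" for i
    using cont_fappf_coord continuous_on_subset by blast
  have nz: "\<forall>t\<in>std_cube k. (\<Sum>j<length L. fappf L cval t j) \<noteq> 0"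
    using back_cube_props(4)[OF L] by fastforce
  show ?thesis unfolding nrm_def
    by (intro continuous_on_coordinatewise_then_product continuous_on_divide continuous_on_sum c nz)
qed

definition F1 :: "nat \<times> ('a \<times> bool option list) \<times> (nat \<Rightarrow> real) \<Rightarrow> nat \<times> 'a \<times> (nat \<Rightarrow> real)" where
  "F1 z = (case z of (k, (x, L), t) \<Rightarrow> (length L - 1, x, nrm (length L) (fappf L cval t)))"

lemma resp1:
  assumes X: "delta_set X d" and l: "l \<in> cface p k" and xl: "xl \<in> sd_box X k" and t: "t \<in> std_cube p"
  shows "(F1 (p, sd_box_act d l xl, t), F1 (k, xl, fappf l cval t)) \<in> grel X std_simplex sface d (\<lambda>l. fappf l sval)"
proof -
  obtain x L where xl_eq: "xl = (x, L)" by (cases xl)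
  have L: "L \<in> back_face k (length L)" "k < length L" "x \<in> X (length L - 1)"
    using xl unfolding xl_eq sd_box_def by auto
  have lenl: "length l = k" "fdim l = p" using l by (auto simp: faces_of_def)
  have fL: "fdim L = k" using L(1) by (simp add: back_face_def faces_of_def)
  define nu where "nu = fcomp L l"
  define B where "B = back_part nu"
  define lam where "lam = restr (front_part nu)"
  define w where "w = fappf B cval t"
  have act: "sd_box_act d l xl = (d lam x, B)"
    unfolding xl_eq sd_box_act_def Let_def nu_def lam_def B_def by simp
  have valid: "(d lam x, B) \<in> sd_box X p" using sd_box_valid[OF X l xl] act by simp
  have s: "nrm (length B) w \<in> std_simplex (length B - 1)" unfolding w_def using totp1[OF valid t] .
  have lamf: "lam \<in> sface (length B - 1) (length L - 1)"
    using restr_front_face(1)[OF L(1,2) l] unfolding lam_def B_def nu_def .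
  have gen: "((length B - 1, d lam x, nrm (length B) w), (length L - 1, x, fappf lam sval (nrm (length B) w)))
     \<in> grel X std_simplex sface d (\<lambda>l. fappf l sval)"
    by (rule grel_gen[where faces = sface and S = X and shape = std_simplex and act = d and app = "\<lambda>l. fappf l sval", OF lamf L(3) s])
  have e1: "fappf L cval (fappf l cval t) = fappf lam sval w"
  proof -
    have "fappf L cval (fappf l cval t) = fappf nu cval t"
      unfolding nu_def using fappf_fcomp[of l L cval t] lenl fL by simp
    also have "\<dots> = fappf (front_part nu) cval w"
      unfolding w_def B_def using fappf_fcomp[of "back_part nu" "front_part nu" cval t] fcomp_front_back[of nu]
      by (simp add: fdim_front)
    also have "\<dots> = fappf lam sval w" unfolding lam_def by (rule fappf_front_restr)
    finally show ?thesis .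
  qed
  have lenlam: "length lam = length L" "fdim lam = length B"
    unfolding lam_def B_def nu_def by (simp_all add: fdim_front)
  have e2: "(\<Sum>i<length L. fappf lam sval w i) = (\<Sum>j<length B. w j)"
    using fappf_sum0[of lam w] lenlam unfolding sval_0 by simp
  have e3: "fappf lam sval (nrm (length B) w) = nrm (length L) (fappf lam sval w)"
  proof -
    have nw: "nrm (length B) w = (\<lambda>j. inverse (\<Sum>j<length B. w j) * w j)"
      unfolding nrm_def by (simp add: fun_eq_iff field_simps)
    have e2': "(\<Sum>i<length L. fappf lam (\<lambda>_. 0) w i) = (\<Sum>j<length B. w j)" using e2 unfolding sval_0 .
    show ?thesis unfolding nw sval_0 fappf_scale0 unfolding nrm_def e2'
      by (simp add: fun_eq_iff field_simps)
  qed
  have "F1 (p, sd_box_act d l xl, t) = (length B - 1, d lam x, nrm (length B) w)"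
    unfolding act F1_def w_def by simp
  moreover have "F1 (k, xl, fappf l cval t) = (length L - 1, x, nrm (length L) (fappf lam sval w))"
    unfolding xl_eq F1_def using e1 by simp
  ultimately show ?thesis using gen e3 by simp
qed

lemma fpt_nth: "i < N \<Longrightarrow> fpt dec N t ! i = dec (t i)"
  by (induction N arbitrary: t i) (auto simp: nth_Cons split: nat.splits)

lemma fpt_set: "e \<in> set (fpt dec N t) \<Longrightarrow> \<exists>r. e = dec r"
  by (induction N arbitrary: t) auto

lemma interior_recover:
  assumes xl: "(x, L) \<in> sd_box X p" and t: "t \<in> std_cube p" and int: "\<And>j. j < p \<Longrightarrow> 0 < t j \<and> t j < 1"
  shows "fpt dec_c (length L) (fappf L cval t) = L" "strp dec_c (length L) (fappf L cval t) = t"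
proof -
  have fL: "fdim L = p" using xl by (simp add: sd_box_def back_face_def faces_of_def)
  have dn: "dec_c (t j) = None" if "j < fdim L" for j using int[of j] that fL by (auto simp: dec_c_def)
  show "fpt dec_c (length L) (fappf L cval t) = L"
    using fpt_fappf[of dec_c cval L t] dec_c_v2 fpt_interior[of "fdim L" dec_c t] dn fcomp_id_right by metis
  have van: "\<forall>i\<ge>fdim L. t i = 0" using t fL by (simp add: std_cube_def)
  show "strp dec_c (length L) (fappf L cval t) = t"
    using strp_fappf[of dec_c cval L t] dec_c_v2 strp_interior_id[of "fdim L" dec_c t] dn van by metis
qed

lemma cell_inj1:
  assumes a: "(p, (x1, L1), t1) \<in> real_total (sd_box X) std_cube" and b: "(q, (x2, L2), t2) \<in> real_total (sd_box X) std_cube"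
    and ia: "\<And>j. j < p \<Longrightarrow> 0 < t1 j \<and> t1 j < 1" and ib: "\<And>j. j < q \<Longrightarrow> 0 < t2 j \<and> t2 j < 1"
    and eq: "F1 (p, (x1, L1), t1) = F1 (q, (x2, L2), t2)"
  shows "(p, (x1, L1), t1) = (q, (x2, L2), t2)"
proof -
  have A: "(x1, L1) \<in> sd_box X p" "t1 \<in> std_cube p" using a by (auto simp: real_total_def)
  have B: "(x2, L2) \<in> sd_box X q" "t2 \<in> std_cube q" using b by (auto simp: real_total_def)
  have L1: "L1 \<in> back_face p (length L1)" "p < length L1" using A by (auto simp: sd_box_def)
  have L2: "L2 \<in> back_face q (length L2)" "q < length L2" using B by (auto simp: sd_box_def)
  have e: "length L1 - 1 = length L2 - 1" "x1 = x2" "nrm (length L1) (fappf L1 cval t1) = nrm (length L2) (fappf L2 cval t2)"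
    using eq by (auto simp: F1_def)
  have N: "length L1 = length L2" using e(1) L1(2) L2(2) by arith
  define u1 where "u1 = fappf L1 cval t1"
  define u2 where "u2 = fappf L2 cval t2"
  define S1 where "S1 = (\<Sum>j<length L1. u1 j)"
  define S2 where "S2 = (\<Sum>j<length L1. u2 j)"
  have S1: "1 \<le> S1" unfolding S1_def u1_def using back_cube_props(4)[OF L1 A(2)] .
  have S2: "1 \<le> S2" unfolding S2_def u2_def using back_cube_props(4)[OF L2 B(2)] N by simp
  have q: "u1 i / S1 = u2 i / S2" for i using e(3) N unfolding nrm_def u1_def u2_def S1_def S2_def by (metis)
  obtain i1 where i1: "u1 i1 = 1" using back_cube_props(1)[OF L1 A(2)] u1_def by blast
  obtain i2 where i2: "u2 i2 = 1" using back_cube_props(1)[OF L2 B(2)] u2_def by blast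
  have "u2 i1 \<le> 1" unfolding u2_def using back_cube_props(3)[OF L2 B(2)] .
  then have "u2 i1 / S2 \<le> 1 / S2" using S2 by (simp add: divide_right_mono)
  then have "1 / S1 \<le> 1 / S2" using q[of i1] i1 by simp
  moreover have "u1 i2 \<le> 1" unfolding u1_def using back_cube_props(3)[OF L1 A(2)] .
  then have "u1 i2 / S1 \<le> 1 / S1" using S1 by (simp add: divide_right_mono)
  then have "1 / S2 \<le> 1 / S1" using q[of i2] i2 by simp
  ultimately have "S1 = S2" using S1 S2 by (simp add: divide_le_eq le_divide_eq)
  then have u: "u1 = u2" using q S1 by (auto simp: fun_eq_iff)
  have LL: "L1 = L2" using interior_recover(1)[OF A ia] interior_recover(1)[OF B ib] u N unfolding u1_def u2_def by metis
  have tt: "t1 = t2" using interior_recover(2)[OF A ia] interior_recover(2)[OF B ib] u N unfolding u1_def u2_def by metis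
  have "p = q" using L1(1) L2(1) LL by (simp add: back_face_def faces_of_def)
  then show ?thesis using LL tt e(2) by simp
qed

lemma strip_A1:
  assumes X: "delta_set X d" and a: "a \<in> real_total (sd_box X) std_cube"
  shows "\<exists>p xl t'. (p, xl, t') \<in> real_total (sd_box X) std_cube \<and> (\<forall>j<p. 0 < t' j \<and> t' j < 1) \<and>
     ((p, xl, t'), a) \<in> grel (sd_box X) std_cube cface (sd_box_act d) (\<lambda>l. fappf l cval)"
proof -
  obtain k xl t where a_eq: "a = (k, xl, t)" and xl: "xl \<in> sd_box X k" and t: "t \<in> std_cube k"
    using a by (auto simp: real_total_def)
  define lam where "lam = fpt dec_c k t"
  define t' where "t' = strp dec_c k t"
  have lf: "lam \<in> cface (fdim lam) k" and t'c: "t' \<in> std_cube (fdim lam)"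
    using strip_cube[OF t] unfolding lam_def t'_def by auto
  have van: "\<forall>i\<ge>k + 0. t i = 0" using t by (simp add: std_cube_def)
  have r: "((fdim (fpt dec_c (k + 0) t) - 0, sd_box_act d (fpt dec_c (k + 0) t) xl, strp dec_c (k + 0) t), (k, xl, t))
     \<in> grel (sd_box X) std_cube (faces_of 0) (sd_box_act d) (\<lambda>l. fappf l cval)"
    by (rule strip_rel[where S = "sd_box X", OF dec_c_v _ _ xl van]) (use lf t'c lam_def t'_def in simp_all)
  have v: "sd_box_act d lam xl \<in> sd_box X (fdim lam)" using sd_box_valid[OF X lf xl] .
  have int: "0 < t' j \<and> t' j < 1" if "j < fdim lam" for j
  proof -
    have "dec_c (t' j) = None" unfolding t'_def using strp_interior that unfolding lam_def by blast
    moreover have "0 \<le> t' j \<and> t' j \<le> 1" using t'c that by (simp add: std_cube_def)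
    ultimately have "t' j \<noteq> 0 \<and> t' j \<noteq> 1" "0 \<le> t' j \<and> t' j \<le> 1" by (auto simp: dec_c_None)
    then show ?thesis by linarith
  qed
  show ?thesis
    using r v t'c int unfolding a_eq lam_def t'_def
    by (intro exI[of _ "fdim (fpt dec_c k t)"] exI[of _ "sd_box_act d (fpt dec_c k t) xl"] exI[of _ "strp dec_c k t"]) (simp add: real_total_def)
qed

lemma F1_interior_canon:
  assumes X: "delta_set X d" and a: "(p, (x, L), t) \<in> real_total (sd_box X) std_cube"
    and int: "\<And>j. j < p \<Longrightarrow> 0 < t j \<and> t j < 1"
  shows "canon 1 dec_s d (F1 (p, (x, L), t)) = F1 (p, (x, L), t)"
proof -
  have xl: "(x, L) \<in> sd_box X p" and t: "t \<in> std_cube p" using a by (auto simp: real_total_def)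
  have L: "L \<in> back_face p (length L)" "p < length L" "x \<in> X (length L - 1)" using xl by (auto simp: sd_box_def)
  have fL: "fdim L = p" using L(1) by (simp add: back_face_def faces_of_def)
  define u where "u = fappf L cval t"
  have S: "1 \<le> (\<Sum>j<length L. u j)" unfolding u_def using back_cube_props(4)[OF L(1,2) t] .
  have pos: "0 < u i" if "i < length L" for i
    unfolding u_def
  proof (rule fappf_values'[where P = "\<lambda>r. 0 < r"])
    fix c assume "Some c \<in> set L" then have "c = True" using L(1) by (cases c) (auto simp: back_face_def)
    then show "0 < cval c" by (simp add: cval_def)
  qed (use int fL that in auto)
  have N1: "length L - 1 + 1 = length L" using L(2) by simp
  have "canon 1 dec_s d (length L - 1, x, nrm (length L) u) = (length L - 1, x, nrm (length L) u)"
  proof (rule canon_interior)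
    show "presheaf 1 X d" using X by (simp add: delta_set_def)
    show "x \<in> X (length L - 1)" using L(3) .
    fix i assume "i < length L - 1 + 1"
    then have "0 < nrm (length L) u i" using pos S N1 unfolding nrm_def by simp
    then show "dec_s (nrm (length L) u i) = None" by (simp add: dec_s_def)
  next
    show "\<forall>i\<ge>length L - 1 + 1. nrm (length L) u i = 0"
      unfolding N1 nrm_def u_def by (simp add: fappf_beyond)
  qed
  then show ?thesis unfolding F1_def u_def by simp
qed

lemma inj1:
  assumes X: "delta_set X d" and a: "a \<in> real_total (sd_box X) std_cube" and b: "b \<in> real_total (sd_box X) std_cube"
    and r: "(F1 a, F1 b) \<in> grel X std_simplex sface d (\<lambda>l. fappf l sval)"
  shows "(a, b) \<in> grel (sd_box X) std_cube cface (sd_box_act d) (\<lambda>l. fappf l cval)"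
proof -
  let ?RA = "grel (sd_box X) std_cube cface (sd_box_act d) (\<lambda>l. fappf l cval)"
  let ?RB = "grel X std_simplex sface d (\<lambda>l. fappf l sval)"
  have eqA: "equiv UNIV ?RA" and eqB: "equiv UNIV ?RB" by (rule equiv_grel)+
  have respR: "(F1 z, F1 w) \<in> ?RB" if "(z, w) \<in> ?RA" for z w
    using that resp1[OF X] eqB by (rule grel_induct_resp)
  obtain p xl1 t1 where A: "(p, xl1, t1) \<in> real_total (sd_box X) std_cube" "\<forall>j<p. 0 < t1 j \<and> t1 j < 1"
    "((p, xl1, t1), a) \<in> ?RA" using strip_A1[OF X a] by blast
  obtain q xl2 t2 where B: "(q, xl2, t2) \<in> real_total (sd_box X) std_cube" "\<forall>j<q. 0 < t2 j \<and> t2 j < 1"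
    "((q, xl2, t2), b) \<in> ?RA" using strip_A1[OF X b] by blast
  obtain x1 L1 where xl1: "xl1 = (x1, L1)" by (cases xl1)
  obtain x2 L2 where xl2: "xl2 = (x2, L2)" by (cases xl2)
  have "(F1 (p, xl1, t1), F1 (q, xl2, t2)) \<in> ?RB"
  proof -
    have 1: "(F1 (p, xl1, t1), F1 a) \<in> ?RB" using respR[OF A(3)] .
    have 2: "(F1 b, F1 (q, xl2, t2)) \<in> ?RB" using respR[OF B(3)] eqB by (meson equiv_def symE)
    show ?thesis using 1 r 2 eqB by (meson equiv_def transE)
  qed
  then have "canon 1 dec_s d (F1 (p, xl1, t1)) = canon 1 dec_s d (F1 (q, xl2, t2))"
  proof (rule canon_rel[rotated 3])
    show "presheaf 1 X d" using X by (simp add: delta_set_def)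
    show "\<And>c. dec_s (sval c) = Some c" by (rule dec_s_v2)
    fix p t assume "t \<in> std_simplex p"
    then show "1 \<le> fdim (fpt dec_s (p + 1) t)" by (rule strip_simplex(1))
  qed
  then have "F1 (p, xl1, t1) = F1 (q, xl2, t2)"
    using F1_interior_canon[OF X A(1)[unfolded xl1]] F1_interior_canon[OF X B(1)[unfolded xl2]] A(2) B(2)
    unfolding xl1 xl2 by simp
  then have "(p, xl1, t1) = (q, xl2, t2)"
    using cell_inj1[OF A(1)[unfolded xl1] B(1)[unfolded xl2]] A(2) B(2) unfolding xl1 xl2 by blast
  then have "((q, xl2, t2), a) \<in> ?RA" using A(3) by simp
  then have "(a, (q, xl2, t2)) \<in> ?RA" using eqA by (meson equiv_def symE)
  then show ?thesis using B(3) eqA by (meson equiv_def transE)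
qed

definition dec_t :: "real \<Rightarrow> bool option" where
  "dec_t r = (if r = 1 then Some True else None)"

lemma cover1:
  assumes y: "y \<in> X m"
  shows "\<exists>K. finite K \<and> (\<forall>(n, xl)\<in>K. xl \<in> sd_box X n \<and> (length (snd xl) - 1, fst xl) = (m, y)) \<and>
     std_simplex m \<subseteq> (\<Union>(n, xl)\<in>K. (\<lambda>t. nrm (length (snd xl)) (fappf (snd xl) cval t)) ` std_cube n)"
proof -
  define K where "K = {(p, (y, L)) | p L. length L = Suc m \<and> L \<in> back_face p (Suc m) \<and> p < Suc m}"
  have "K \<subseteq> (\<lambda>(p, L). (p, (y, L))) ` ({..m} \<times> {L. set L \<subseteq> UNIV \<and> length L = Suc m})"
    unfolding K_def by auto
  moreover have "finite ({..m} \<times> {L :: bool option list. set L \<subseteq> UNIV \<and> length L = Suc m})"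
    by (intro finite_cartesian_product finite_lists_length_eq) auto
  ultimately have fin: "finite K" by (rule finite_subset[OF _ finite_imageI])
  have inK: "\<forall>(n, xl)\<in>K. xl \<in> sd_box X n \<and> (length (snd xl) - 1, fst xl) = (m, y)"
    unfolding K_def sd_box_def using y by auto
  have cov: "s \<in> (\<Union>(n, xl)\<in>K. (\<lambda>t. nrm (length (snd xl)) (fappf (snd xl) cval t)) ` std_cube n)"
    if s: "s \<in> std_simplex m" for s
  proof -
    define M where "M = Max (s ` {..m})"
    have "M \<in> s ` {..m}" unfolding M_def by (intro Max_in) auto
    then obtain i0 where i0: "i0 \<le> m" "s i0 = M" by auto
    have le: "s i \<le> M" if "i \<le> m" for i unfolding M_def using that by (intro Max_ge) auto
    have s1: "(\<Sum>i\<le>m. s i) = 1" and s0: "\<And>i. i \<le> m \<Longrightarrow> 0 \<le> s i" and sb: "\<And>i. i > m \<Longrightarrow> s i = 0"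
      using s by (auto simp: std_simplex_def)
    have "1 \<le> (\<Sum>i\<le>m. M)" unfolding s1[symmetric] using le by (intro sum_mono) auto
    then have M1: "1 \<le> real (Suc m) * M" by simp
    have Mpos: "0 < M"
    proof (rule ccontr)
      assume "\<not> 0 < M"
      then have "real (Suc m) * M \<le> 0" by (simp add: mult_nonneg_nonpos)
      then show False using M1 by simp
    qed
    define w where "w i = s i / M" for i
    define L where "L = fpt dec_t (Suc m) w"
    define t where "t = strp dec_t (Suc m) w"
    have wi0: "w i0 = 1" unfolding w_def using i0 Mpos by simp
    have w01: "0 \<le> w i \<and> w i \<le> 1" if "i < Suc m" for i
      unfolding w_def using s0[of i] le[of i] that Mpos by (simp add: divide_le_eq_1)
    have wb: "\<forall>i\<ge>Suc m. w i = 0" unfolding w_def using sb by auto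
    have Li0: "L ! i0 = Some True" unfolding L_def using fpt_nth[of i0 "Suc m" dec_t w] i0 wi0 by (simp add: dec_t_def del: fpt.simps)
    have lenL: "length L = Suc m" unfolding L_def by (simp only: length_fpt)
    have "Some True \<in> set L" using Li0 i0 lenL by (metis le_imp_less_Suc nth_mem)
    then have plt: "fdim L < Suc m" using fdim_less_length[of L] lenL by auto
    have noF: "Some False \<notin> set L"
    proof
      assume "Some False \<in> set L"
      then obtain r where "Some False = dec_t r" unfolding L_def using fpt_set by blast
      then show False by (simp add: dec_t_def split: if_splits)
    qed
    have Lb: "L \<in> back_face (fdim L) (Suc m)"
      using lenL noF unfolding back_face_def faces_of_def by auto
    have tc: "t \<in> std_cube (fdim L)"
    proof -
      have "0 \<le> t j \<and> t j \<le> 1" if "j < fdim L" for j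
        unfolding t_def using that w01 unfolding L_def by (intro strp_values[where P = "\<lambda>r. 0 \<le> r \<and> r \<le> 1"]) auto
      moreover have "t j = 0" if "j \<ge> fdim L" for j unfolding t_def using that unfolding L_def by (intro strp_beyond)
      ultimately show ?thesis unfolding std_cube_def by auto
    qed
    have fw: "fappf L cval t = w" unfolding L_def t_def
      by (rule fappf_fpt_strp[OF _ wb]) (auto simp: dec_t_def cval_def split: if_splits)
    have sumw: "(\<Sum>j<Suc m. w j) = 1 / M" unfolding w_def
      using s1 by (simp add: sum_divide_distrib[symmetric] lessThan_Suc_atMost)
    have "nrm (length L) (fappf L cval t) = s" unfolding fw lenL nrm_def sumw
      unfolding w_def using Mpos by (simp add: fun_eq_iff)
    then have "s \<in> (\<lambda>t. nrm (length (snd (y, L))) (fappf (snd (y, L)) cval t)) ` std_cube (fdim L)"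
      using tc by (intro image_eqI[where x = t]) simp_all
    moreover have "(fdim L, (y, L)) \<in> K" unfolding K_def using lenL Lb plt by auto
    ultimately show ?thesis by (intro UN_I[where a = "(fdim L, (y, L))"]) simp_all
  qed
  have "std_simplex m \<subseteq> (\<Union>(n, xl)\<in>K. (\<lambda>t. nrm (length (snd xl)) (fappf (snd xl) cval t)) ` std_cube n)"
    using cov by (rule subsetI)
  then show ?thesis using fin inK by (intro exI[of _ K]) simp
qed

theorem part1:
  assumes X: "delta_set X d"
  shows "delta_real X d homeomorphic_space cube_real (sd_box X) (sd_box_act d)"
proof -
  have "cube_real (sd_box X) (sd_box_act d) homeomorphic_space delta_real X d"
    unfolding cube_real_def delta_real_def
  proof (rule realisation_homeo[where fc = "\<lambda>n xl. (length (snd xl) - 1, fst xl)"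
        and fphi = "\<lambda>n xl t. nrm (length (snd xl)) (fappf (snd xl) cval t)" and F = F1])
    show "F1 (n, xl, t) = (fst (length (snd xl) - 1, fst xl), snd (length (snd xl) - 1, fst xl),
          nrm (length (snd xl)) (fappf (snd xl) cval t))" for n xl t
      by (cases xl) (simp add: F1_def)
    show "sd_box_act d l xl \<in> sd_box X p \<and> fappf l cval t \<in> std_cube n"
      if "l \<in> cface p n" "xl \<in> sd_box X n" "t \<in> std_cube p" for p n l xl t
      using sd_box_valid[OF X that(1,2)] fappf_cube[OF that(1,3)] by simp
    show "d l x \<in> X p \<and> fappf l sval t \<in> std_simplex n"
      if "l \<in> sface p n" "x \<in> X n" "t \<in> std_simplex p" for p n l x t
      using X that fappf_simplex[OF that(1,3)] unfolding delta_set_def presheaf_def by blast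
    show "snd (length (snd xl) - 1, fst xl) \<in> X (fst (length (snd xl) - 1, fst xl))"
      if "xl \<in> sd_box X n" for n xl
      using that by (auto simp: sd_box_def)
    show "nrm (length (snd xl)) (fappf (snd xl) cval t) \<in> std_simplex (fst (length (snd xl) - 1, fst xl))"
      if "xl \<in> sd_box X n" "t \<in> std_cube n" for n xl t
      using totp1[of "fst xl" "snd xl" X n t] that by simp
    show "continuous_on (std_cube n) (\<lambda>t. nrm (length (snd xl)) (fappf (snd xl) cval t))"
      if "xl \<in> sd_box X n" for n xl
      using cont1[of "fst xl" "snd xl" X n] that by simp
    show "(F1 (p, sd_box_act d l xl, t), F1 (n, xl, fappf l cval t)) \<in> grel X std_simplex sface d (\<lambda>l. fappf l sval)"
      if "l \<in> cface p n" "xl \<in> sd_box X n" "t \<in> std_cube p" for p n l xl t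
      using resp1[OF X that] .
    show "(a, b) \<in> grel (sd_box X) std_cube cface (sd_box_act d) (\<lambda>l. fappf l cval)"
      if "a \<in> real_total (sd_box X) std_cube" "b \<in> real_total (sd_box X) std_cube"
        "(F1 a, F1 b) \<in> grel X std_simplex sface d (\<lambda>l. fappf l sval)" for a b
      using inj1[OF X that] .
    show "\<exists>K. finite K \<and> (\<forall>(n, xl)\<in>K. xl \<in> sd_box X n \<and> (length (snd xl) - 1, fst xl) = (m, y)) \<and>
       std_simplex m \<subseteq> (\<Union>(n, xl)\<in>K. (\<lambda>t. nrm (length (snd xl)) (fappf (snd xl) cval t)) ` std_cube n)"
      if "y \<in> X m" for m y
      using cover1[of y X m] that by blast
    show "compact (std_cube n)" for n by (rule compact_std_cube)
  qed
  then show ?thesis using homeomorphic_space_sym[THEN iffD1] by metis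
qed


definition chain :: "nat \<Rightarrow> bool option list list \<Rightarrow> bool" where
  "chain n ls \<longleftrightarrow> (\<forall>i<length ls. fdim (ls ! i) < length (ls ! i)) \<and>
      (\<forall>i. Suc i < length ls \<longrightarrow> length (ls ! i) = fdim (ls ! Suc i)) \<and>
      (0 < length ls \<longrightarrow> length (ls ! (length ls - 1)) = n)"

lemma sd_delta_chain: "(n, x, ls) \<in> sd_delta C k \<longleftrightarrow> x \<in> C n \<and> length ls = k \<and> chain n ls"
  unfolding sd_delta_def chain_def by auto

definition dimv :: "nat \<Rightarrow> bool option list list \<Rightarrow> nat \<Rightarrow> nat" where
  "dimv n ls j = (if j < length ls then fdim (ls ! j) else n)"

primrec murec :: "nat \<Rightarrow> bool option list list \<Rightarrow> nat \<Rightarrow> bool option list" where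
  "murec n ls 0 = replicate n None"
| "murec n ls (Suc r) = fcomp (murec n ls r) (ls ! (length ls - Suc r))"

definition mu :: "nat \<Rightarrow> bool option list list \<Rightarrow> nat \<Rightarrow> bool option list" where
  "mu n ls j = murec n ls (length ls - j)"

lemma mu_top: "j \<ge> length ls \<Longrightarrow> mu n ls j = replicate n None"
  by (simp add: mu_def)

lemma mu_step: "j < length ls \<Longrightarrow> mu n ls j = fcomp (mu n ls (Suc j)) (ls ! j)"
proof -
  assume j: "j < length ls"
  then have "length ls - j = Suc (length ls - Suc j)" by arith
  moreover have "length ls - Suc (length ls - Suc j) = j" using j by arith
  ultimately show ?thesis unfolding mu_def by simp
qed

lemma chain_len: "chain n ls \<Longrightarrow> j < length ls \<Longrightarrow> length (ls ! j) = dimv n ls (Suc j)"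
proof -
  assume c: "chain n ls" and j: "j < length ls"
  show ?thesis
  proof (cases "Suc j < length ls")
    case True then show ?thesis using c unfolding chain_def dimv_def by simp
  next
    case False
    then have "j = length ls - 1" using j by arith
    moreover have "ls \<noteq> []" using j by auto
    ultimately show ?thesis using c j False unfolding chain_def dimv_def by simp
  qed
qed

lemma chain_dim_lt: "chain n ls \<Longrightarrow> j < length ls \<Longrightarrow> dimv n ls j < dimv n ls (Suc j)"
  using chain_len[of n ls j] unfolding chain_def dimv_def by auto

lemma mu_len_dim:
  assumes c: "chain n ls" and j: "j \<le> length ls"
  shows "length (mu n ls j) = n \<and> fdim (mu n ls j) = dimv n ls j"
  using j
proof (induction rule: inc_induct)
  case base then show ?case by (simp add: mu_top dimv_def)
next
  case (step j)
  then show ?case using mu_step[OF step.hyps(2)] chain_len[OF c step.hyps(2)]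
    by (simp add: fdim_fcomp dimv_def)
qed

lemma dimv_mono: "chain n ls \<Longrightarrow> j < j' \<Longrightarrow> j' \<le> length ls \<Longrightarrow> dimv n ls j < dimv n ls j'"
proof (induction j' rule: less_induct)
  case (less j')
  then obtain j0 where j0: "j' = Suc j0" by (cases j') auto
  have "dimv n ls j0 < dimv n ls j'" using chain_dim_lt[OF less.prems(1)] less.prems j0 by simp
  show ?case
  proof (cases "j = j0")
    case True then show ?thesis using \<open>dimv n ls j0 < dimv n ls j'\<close> by simp
  next
    case False
    then have "dimv n ls j < dimv n ls j0" using less.IH[of j0] less.prems j0 by simp
    then show ?thesis using \<open>dimv n ls j0 < dimv n ls j'\<close> by simp
  qed
qed

lemma cmpn_len_dim: "chain n ls \<Longrightarrow> j + m < length ls \<Longrightarrow>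
    length (cmpn ls j m) = dimv n ls (Suc (j + m)) \<and> fdim (cmpn ls j m) = dimv n ls j"
proof (induction m)
  case 0 then show ?case using chain_len[of n ls j] by (simp add: dimv_def)
next
  case (Suc m)
  have "length (ls ! (j + Suc m)) = dimv n ls (Suc (j + Suc m))" using chain_len Suc.prems by simp
  moreover have "fdim (ls ! (j + Suc m)) = dimv n ls (j + Suc m)" using Suc.prems by (simp add: dimv_def)
  ultimately show ?case using Suc by (simp add: fdim_fcomp)
qed

lemma mu_cmpn: "chain n ls \<Longrightarrow> j + m < length ls \<Longrightarrow> fcomp (mu n ls (Suc (j + m))) (cmpn ls j m) = mu n ls j"
proof (induction m)
  case 0 then show ?case using mu_step[of j ls n] by simp
next
  case (Suc m)
  have l1: "length (ls ! (j + Suc m)) = fdim (mu n ls (Suc (j + Suc m)))"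
    using chain_len[OF Suc.prems(1), of "j + Suc m"] mu_len_dim[OF Suc.prems(1), of "Suc (j + Suc m)"] Suc.prems(2) by simp
  have "fcomp (mu n ls (Suc (j + Suc m))) (cmpn ls j (Suc m))
      = fcomp (fcomp (mu n ls (Suc (j + Suc m))) (ls ! (j + Suc m))) (cmpn ls j m)"
    using fcomp_assoc[OF l1] by simp
  also have "fcomp (mu n ls (Suc (j + Suc m))) (ls ! (j + Suc m)) = mu n ls (Suc (j + m))"
    using mu_step[of "j + Suc m" ls n] Suc.prems by simp
  finally show ?case using Suc by simp
qed

lemma mu_cmpn_top: "chain n ls \<Longrightarrow> j < length ls \<Longrightarrow> cmpn ls j (length ls - j - 1) = mu n ls j"
proof -
  assume c: "chain n ls" and j: "j < length ls"
  have e: "Suc (j + (length ls - j - 1)) = length ls" "j + (length ls - j - 1) < length ls" using j by arith+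
  have "length (cmpn ls j (length ls - j - 1)) = n"
    using cmpn_len_dim[OF c e(2)] unfolding e(1) by (simp add: dimv_def)
  moreover have "fcomp (mu n ls (length ls)) (cmpn ls j (length ls - j - 1)) = mu n ls j"
    using mu_cmpn[OF c e(2)] unfolding e(1) .
  moreover have "mu n ls (length ls) = replicate n None" by (rule mu_top) simp
  ultimately show ?thesis using fcomp_id_left[of "cmpn ls j (length ls - j - 1)" n] by metis
qed

lemma hits_Nil[simp]: "hits [] = []" by (simp add: hits_def)
lemma hits_Cons: "hits (a # l) = (if a = None then 0 # map Suc (hits l) else map Suc (hits l))"
proof -
  have "[0..<Suc N] = 0 # map Suc [0..<N]" for N by (subst upt_rec) (simp add: map_Suc_upt)
  then have "[0..<Suc (length l)] = 0 # map Suc [0..<length l]" .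
  then show ?thesis unfolding hits_def by (simp add: filter_map o_def)
qed
lemma length_hits: "length (hits l) = fdim l"
  by (induction l) (auto simp: hits_Cons fdim_Cons)
lemma set_hits: "set (hits l) = {j. j < length l \<and> l ! j = None}"
  unfolding hits_def by auto
lemma sorted_hits: "sorted_wrt (<) (hits l)"
  unfolding hits_def by (intro sorted_wrt_filter) simp

lemma fappf_weighted:
  "(\<Sum>j<length l. fappf l (\<lambda>_. 0) s j * g j) = (\<Sum>a<fdim l. s a * g (hits l ! a))"
proof (induction l arbitrary: s g)
  case Nil then show ?case by simp
next
  case (Cons e l)
  show ?case
  proof (cases e)
    case None
    have "(\<Sum>j<length (e # l). fappf (e # l) (\<lambda>_. 0) s j * g j)
        = s 0 * g 0 + (\<Sum>j<length l. fappf l (\<lambda>_. 0) (\<lambda>j. s (Suc j)) j * g (Suc j))"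
      using None by (simp del: sum.lessThan_Suc add: sum.lessThan_Suc_shift)
    also have "\<dots> = s 0 * g 0 + (\<Sum>a<fdim l. s (Suc a) * g (Suc (hits l ! a)))"
      using Cons.IH[of "\<lambda>j. s (Suc j)" "\<lambda>j. g (Suc j)"] by simp
    also have "\<dots> = (\<Sum>a<fdim (e # l). s a * g (hits (e # l) ! a))"
      using None length_hits[of l] by (simp del: sum.lessThan_Suc add: sum.lessThan_Suc_shift hits_Cons)
    finally show ?thesis .
  next
    case (Some c)
    have "(\<Sum>j<length (e # l). fappf (e # l) (\<lambda>_. 0) s j * g j)
        = (\<Sum>j<length l. fappf l (\<lambda>_. 0) s j * g (Suc j))"
      using Some by (simp del: sum.lessThan_Suc add: sum.lessThan_Suc_shift)
    also have "\<dots> = (\<Sum>a<fdim l. s a * g (Suc (hits l ! a)))"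
      using Cons.IH[of s "\<lambda>j. g (Suc j)"] by simp
    also have "\<dots> = (\<Sum>a<fdim (e # l). s a * g (hits (e # l) ! a))"
      using Some length_hits[of l] by (simp add: hits_Cons)
    finally show ?thesis .
  qed
qed

lemma fappf_affine:
  assumes fin: "finite A" and w1: "(\<Sum>a\<in>A. w a) = 1"
  shows "fappf l v (\<lambda>i. \<Sum>a\<in>A. w a * u a i) = (\<lambda>i. \<Sum>a\<in>A. w a * fappf l v (u a) i)"
proof (induction l arbitrary: u)
  case Nil then show ?case by simp
next
  case (Cons e l)
  show ?case
  proof (rule ext)
    fix i
    show "fappf (e # l) v (\<lambda>i. \<Sum>a\<in>A. w a * u a i) i = (\<Sum>a\<in>A. w a * fappf (e # l) v (u a) i)"
    proof (cases e)
      case None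
      then show ?thesis
      proof (cases i)
        case (Suc i')
        have "fappf l v (\<lambda>j. \<Sum>a\<in>A. w a * u a (Suc j)) = (\<lambda>i. \<Sum>a\<in>A. w a * fappf l v (\<lambda>j. u a (Suc j)) i)"
          using Cons.IH[of "\<lambda>a j. u a (Suc j)"] by simp
        then show ?thesis using None Suc by (simp add: fun_eq_iff)
      qed simp
    next
      case (Some c)
      then show ?thesis
      proof (cases i)
        case 0
        have "(\<Sum>a\<in>A. w a * v c) = v c" using w1 by (simp add: sum_distrib_right[symmetric])
        then show ?thesis using Some 0 by simp
      next
        case (Suc i')
        then show ?thesis using Some Cons.IH[of u] by (simp add: fun_eq_iff)
      qed
    qed
  qed
qed

definition bary :: "bool option list \<Rightarrow> nat \<Rightarrow> real" where
  "bary m = fappf m cval (\<lambda>_. 1/2)"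

definition Phi :: "nat \<Rightarrow> bool option list list \<Rightarrow> (nat \<Rightarrow> real) \<Rightarrow> nat \<Rightarrow> real" where
  "Phi n ls s = (\<lambda>i. \<Sum>j\<le>length ls. s j * bary (mu n ls j) i)"

lemma bary_range: "0 \<le> bary m i \<and> bary m i \<le> 1"
proof (cases "i < length m")
  case True
  show ?thesis unfolding bary_def
    by (rule fappf_values[OF _ _ True, where P = "\<lambda>r. 0 \<le> r \<and> r \<le> 1"]) (auto simp: cval_def)
qed (simp add: bary_def fappf_beyond)

lemma totp2:
  assumes c: "chain n ls" and s: "s \<in> std_simplex (length ls)"
  shows "Phi n ls s \<in> std_cube n"
proof -
  have s0: "\<And>j. j \<le> length ls \<Longrightarrow> 0 \<le> s j" and s1: "(\<Sum>j\<le>length ls. s j) = 1"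
    using s by (auto simp: std_simplex_def)
  have "0 \<le> Phi n ls s i \<and> Phi n ls s i \<le> 1" for i
  proof
    show "0 \<le> Phi n ls s i" unfolding Phi_def using s0 bary_range by (intro sum_nonneg) simp
    have "Phi n ls s i \<le> (\<Sum>j\<le>length ls. s j * 1)" unfolding Phi_def
      using s0 bary_range by (intro sum_mono mult_left_mono) auto
    then show "Phi n ls s i \<le> 1" using s1 by simp
  qed
  moreover have "Phi n ls s i = 0" if "i \<ge> n" for i
  proof -
    have "bary (mu n ls j) i = 0" if "j \<le> length ls" for j
      using mu_len_dim[OF c that] \<open>i \<ge> n\<close> unfolding bary_def by (simp add: fappf_beyond)
    then show ?thesis unfolding Phi_def by simp
  qed
  ultimately show ?thesis unfolding std_cube_def by auto
qed

lemma cont2: "continuous_on UNIV (Phi n ls)"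
  unfolding Phi_def
  by (intro continuous_on_coordinatewise_then_product continuous_on_sum continuous_on_mult
      continuous_on_const continuous_on_product_coordinates)

lemma seg_props:
  assumes c: "chain n ls" and jj: "j < j'" "j' \<le> length ls"
  shows "length (cmpn ls j (j' - j - 1)) = dimv n ls j'" "fdim (cmpn ls j (j' - j - 1)) = dimv n ls j"
    "fcomp (mu n ls j') (cmpn ls j (j' - j - 1)) = mu n ls j"
proof -
  have e: "j + (j' - j - 1) < length ls" "Suc (j + (j' - j - 1)) = j'" using jj by arith+
  show "length (cmpn ls j (j' - j - 1)) = dimv n ls j'" "fdim (cmpn ls j (j' - j - 1)) = dimv n ls j"
    using cmpn_len_dim[OF c e(1)] unfolding e(2) by auto
  show "fcomp (mu n ls j') (cmpn ls j (j' - j - 1)) = mu n ls j"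
    using mu_cmpn[OF c e(1)] unfolding e(2) .
qed

lemma hits_props:
  assumes l: "l \<in> sface p k"
  shows "length (hits l) = Suc p" "\<And>a. a < Suc p \<Longrightarrow> hits l ! a \<le> k"
    "\<And>a b. a < b \<Longrightarrow> b < Suc p \<Longrightarrow> hits l ! a < hits l ! b"
proof -
  show len: "length (hits l) = Suc p" using l by (simp add: length_hits faces_of_def)
  show "hits l ! a \<le> k" if "a < Suc p" for a
  proof -
    have "hits l ! a \<in> set (hits l)" using that len by simp
    then show ?thesis using l unfolding set_hits faces_of_def by auto
  qed
  show "hits l ! a < hits l ! b" if "a < b" "b < Suc p" for a b
    using sorted_wrt_nth_less[OF sorted_hits that(1)] that len by simp
qed

lemma act_analysis:
  assumes C: "cube_set C c" and l: "l \<in> sface p k" and z: "(n, x, ls) \<in> sd_delta C k"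
  defines "js \<equiv> hits l"
  defines "ls' \<equiv> map (\<lambda>a. cmpn ls (js ! a) (js ! Suc a - js ! a - 1)) [0..<p]"
  shows "sd_delta_act c l (n, x, ls) = (dimv n ls (js ! p), c (mu n ls (js ! p)) x, ls')"
    "chain (dimv n ls (js ! p)) ls'" "length ls' = p"
    "\<And>a. a \<le> p \<Longrightarrow> fcomp (mu n ls (js ! p)) (mu (dimv n ls (js ! p)) ls' a) = mu n ls (js ! a)"
    "mu n ls (js ! p) \<in> cface (dimv n ls (js ! p)) n"
proof -
  have xC: "x \<in> C n" and k: "length ls = k" and c: "chain n ls" using z by (auto simp: sd_delta_chain)
  have len: "length js = Suc p" and jk: "\<And>a. a < Suc p \<Longrightarrow> js ! a \<le> k"
    and jlt: "\<And>a b. a < b \<Longrightarrow> b < Suc p \<Longrightarrow> js ! a < js ! b"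
    using hits_props[OF l] unfolding js_def by auto
  let ?jp = "js ! p"
  have jpk: "?jp \<le> length ls" using jk[of p] k by simp
  have ne: "js \<noteq> []" using len by auto
  have last: "last js = ?jp" using last_conv_nth[OF ne] len by simp
  have ps: "presheaf 0 C c" using C by (simp add: cube_set_def)
  show "sd_delta_act c l (n, x, ls) = (dimv n ls ?jp, c (mu n ls ?jp) x, ls')"
  proof (cases "?jp = length ls")
    case True
    have "c (replicate n None) x = x" using ps xC unfolding presheaf_def by auto
    then show ?thesis unfolding sd_delta_act_def Let_def js_def[symmetric] last ls'_def
      using True len by (simp add: dimv_def mu_top)
  next
    case False
    then have lt: "?jp < length ls" using jpk by simp
    then show ?thesis unfolding sd_delta_act_def Let_def js_def[symmetric] last ls'_def
      using False len mu_cmpn_top[OF c lt] by (simp add: dimv_def)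
  qed
  show lenls': "length ls' = p" unfolding ls'_def by simp
  have ent: "ls' ! a = cmpn ls (js ! a) (js ! Suc a - js ! a - 1)" if "a < p" for a
    unfolding ls'_def using that by simp
  have seg: "length (ls' ! a) = dimv n ls (js ! Suc a)" "fdim (ls' ! a) = dimv n ls (js ! a)"
    "fcomp (mu n ls (js ! Suc a)) (ls' ! a) = mu n ls (js ! a)" if "a < p" for a
    using seg_props[OF c jlt[of a "Suc a"], unfolded ent[OF that, symmetric]] jk[of "Suc a"] that k by auto
  show ch: "chain (dimv n ls ?jp) ls'"
    unfolding chain_def lenls'
  proof (intro conjI allI impI)
    fix a assume a: "a < p"
    show "fdim (ls' ! a) < length (ls' ! a)" using seg[OF a] dimv_mono[OF c jlt[of a "Suc a"]] jk[of "Suc a"] a k by simp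
  next
    fix a assume a: "Suc a < p"
    show "length (ls' ! a) = fdim (ls' ! Suc a)" using seg[of a] seg[of "Suc a"] a by simp
  next
    assume "0 < p"
    then show "length (ls' ! (p - 1)) = dimv n ls ?jp" using seg[of "p - 1"] by simp
  qed
  have mlen: "length (mu n ls ?jp) = n" "fdim (mu n ls ?jp) = dimv n ls ?jp" using mu_len_dim[OF c jpk] by auto
  show "mu n ls ?jp \<in> cface (dimv n ls ?jp) n" using mlen by (simp add: faces_of_def)
  show "fcomp (mu n ls ?jp) (mu (dimv n ls ?jp) ls' a) = mu n ls (js ! a)" if "a \<le> p" for a
    using that
  proof (induction rule: inc_induct)
    case base
    show ?case using mu_top[of ls' p "dimv n ls ?jp"] lenls' fcomp_id_right[of "mu n ls ?jp"] mlen by simp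
  next
    case (step a)
    have m1: "mu (dimv n ls ?jp) ls' a = fcomp (mu (dimv n ls ?jp) ls' (Suc a)) (ls' ! a)"
      using mu_step[of a ls' "dimv n ls ?jp"] step.hyps lenls' by simp
    have l1: "length (mu (dimv n ls ?jp) ls' (Suc a)) = fdim (mu n ls ?jp)"
      using mu_len_dim[OF ch, of "Suc a"] step.hyps lenls' mlen by simp
    show ?case unfolding m1 fcomp_assoc[OF l1, symmetric] step.IH using seg(3)[OF step.hyps(2)] .
  qed
qed

lemma validA2:
  assumes C: "cube_set C c" and l: "l \<in> sface p k" and z: "z \<in> sd_delta C k"
  shows "sd_delta_act c l z \<in> sd_delta C p"
proof -
  obtain n x ls where z_eq: "z = (n, x, ls)" by (cases z) auto
  note A = act_analysis[OF C l z[unfolded z_eq]]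
  have xC: "x \<in> C n" using z z_eq by (auto simp: sd_delta_chain)
  have "c (mu n ls (hits l ! p)) x \<in> C (dimv n ls (hits l ! p))"
    using C A(5) xC unfolding cube_set_def presheaf_def by auto
  then show ?thesis unfolding z_eq A(1) sd_delta_chain using A(2,3) by simp
qed

definition F2 :: "nat \<times> (nat \<times> 'a \<times> bool option list list) \<times> (nat \<Rightarrow> real) \<Rightarrow> nat \<times> 'a \<times> (nat \<Rightarrow> real)" where
  "F2 z = (case z of (k, (n, x, ls), s) \<Rightarrow> (n, x, Phi n ls s))"

lemma resp2:
  assumes C: "cube_set C c" and l: "l \<in> sface p k" and z: "z \<in> sd_delta C k" and s: "s \<in> std_simplex p"
  shows "(F2 (p, sd_delta_act c l z, s), F2 (k, z, fappf l sval s)) \<in> grel C std_cube cface c (\<lambda>l. fappf l cval)"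
proof -
  obtain n x ls where z_eq: "z = (n, x, ls)" by (cases z) auto
  have z': "(n, x, ls) \<in> sd_delta C k" using z z_eq by simp
  have xC: "x \<in> C n" and k: "length ls = k" and c: "chain n ls" using z' by (auto simp: sd_delta_chain)
  define js where "js = hits l"
  define ls' where "ls' = map (\<lambda>a. cmpn ls (js ! a) (js ! Suc a - js ! a - 1)) [0..<p]"
  define jp where "jp = js ! p"
  define n' where "n' = dimv n ls jp"
  note A = act_analysis[OF C l z', folded js_def, folded ls'_def jp_def, folded n'_def]
  have t': "Phi n' ls' s \<in> std_cube n'" using totp2[OF A(2)] s A(3) by simp
  have gen: "((n', c (mu n ls jp) x, Phi n' ls' s), (n, x, fappf (mu n ls jp) cval (Phi n' ls' s)))
      \<in> grel C std_cube cface c (\<lambda>l. fappf l cval)"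
    by (rule grel_gen[where faces = cface and S = C and shape = std_cube and act = c and app = "\<lambda>l. fappf l cval", OF A(5) xC t'])
  have s1: "(\<Sum>a\<le>p. s a) = 1" using s by (simp add: std_simplex_def)
  have mjl: "length (mu n' ls' a) = fdim (mu n ls jp)" if "a \<le> p" for a
    using mu_len_dim[OF A(2), of a] mu_len_dim[OF c, of jp] A(3) that hits_props(2)[OF l, of p] k
    unfolding n'_def jp_def js_def by simp
  have "fappf (mu n ls jp) cval (Phi n' ls' s) = (\<lambda>i. \<Sum>a\<le>p. s a * fappf (mu n ls jp) cval (bary (mu n' ls' a)) i)"
    unfolding Phi_def A(3) by (rule fappf_affine) (use s1 in auto)
  also have "\<dots> = (\<lambda>i. \<Sum>a\<le>p. s a * bary (mu n ls (js ! a)) i)"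
  proof (rule ext, rule sum.cong[OF refl])
    fix i a assume a: "a \<in> {..p}"
    have "fappf (mu n ls jp) cval (bary (mu n' ls' a)) = bary (fcomp (mu n ls jp) (mu n' ls' a))"
      unfolding bary_def using fappf_fcomp[OF mjl] a by simp
    then show "s a * fappf (mu n ls jp) cval (bary (mu n' ls' a)) i = s a * bary (mu n ls (js ! a)) i"
      using A(4)[of a] a by simp
  qed
  also have "\<dots> = Phi n ls (fappf l sval s)"
  proof (rule ext)
    fix i
    have ll: "length l = Suc k" "fdim l = Suc p" using l by (auto simp: faces_of_def)
    have "Phi n ls (fappf l sval s) i = (\<Sum>j<length l. fappf l (\<lambda>_. 0) s j * bary (mu n ls j) i)"
      unfolding Phi_def sval_0 k ll by (simp add: lessThan_Suc_atMost)
    also have "\<dots> = (\<Sum>a<fdim l. s a * bary (mu n ls (hits l ! a)) i)" by (rule fappf_weighted)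
    finally show "(\<Sum>a\<le>p. s a * bary (mu n ls (js ! a)) i) = Phi n ls (fappf l sval s) i"
      unfolding js_def ll by (simp add: lessThan_Suc_atMost)
  qed
  finally have eq: "fappf (mu n ls jp) cval (Phi n' ls' s) = Phi n ls (fappf l sval s)" .
  have "F2 (p, sd_delta_act c l z, s) = (n', c (mu n ls jp) x, Phi n' ls' s)"
    unfolding z_eq A(1) F2_def by simp
  moreover have "F2 (k, z, fappf l sval s) = (n, x, Phi n ls (fappf l sval s))"
    unfolding z_eq F2_def by simp
  ultimately show ?thesis using gen eq by simp
qed

lemma fcomp_nth_Some: "i < length l \<Longrightarrow> l ! i = Some b \<Longrightarrow> fcomp l m ! i = Some b"
proof (induction l m arbitrary: i rule: fcomp.induct)
  case (2 c ls ms) then show ?case by (cases i) auto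
next
  case (3 ls ms) then show ?case by (cases i) (auto split: list.splits)
qed simp

lemma fappf_const_None: "i < length l \<Longrightarrow> l ! i = None \<Longrightarrow> fappf l v (\<lambda>_. r) i = r"
proof (induction l arbitrary: i)
  case Nil then show ?case by simp
next
  case (Cons a l) then show ?case by (cases a; cases i) auto
qed

lemma fdim_card: "fdim l = card {i. i < length l \<and> l ! i = None}"
  unfolding fdim_def by (rule length_filter_conv_card)

context
  fixes n :: nat and ls :: "bool option list list"
  assumes ch: "chain n ls"
begin

lemma mu_mono: "j \<le> j' \<Longrightarrow> j' \<le> length ls \<Longrightarrow> i < n \<Longrightarrow> mu n ls j' ! i = Some b \<Longrightarrow> mu n ls j ! i = Some b"
proof (induction j rule: inc_induct)
  case base then show ?case by simp
next
  case (step j)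
  have "mu n ls j = fcomp (mu n ls (Suc j)) (ls ! j)" using mu_step step by simp
  moreover have "i < length (mu n ls (Suc j))" using mu_len_dim[OF ch, of "Suc j"] step by simp
  ultimately show ?case using fcomp_nth_Some step by simp
qed

definition mi :: "nat \<Rightarrow> nat" where "mi i = (LEAST j. mu n ls j ! i = None)"

lemma mu_top_None: "i < n \<Longrightarrow> mu n ls (length ls) ! i = None"
  by (simp add: mu_top)

lemma mi_le: "i < n \<Longrightarrow> mi i \<le> length ls"
  unfolding mi_def using mu_top_None by (intro Least_le)

lemma mu_None_iff: "i < n \<Longrightarrow> j \<le> length ls \<Longrightarrow> mu n ls j ! i = None \<longleftrightarrow> mi i \<le> j"
proof
  assume "i < n" "mu n ls j ! i = None"
  then show "mi i \<le> j" unfolding mi_def by (intro Least_le)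
next
  assume i: "i < n" and j: "j \<le> length ls" and le: "mi i \<le> j"
  have mN: "mu n ls (mi i) ! i = None" unfolding mi_def using mu_top_None[OF i] by (rule LeastI)
  show "mu n ls j ! i = None"
  proof (rule ccontr)
    assume "mu n ls j ! i \<noteq> None"
    then obtain b where "mu n ls j ! i = Some b" by auto
    then have "mu n ls (mi i) ! i = Some b" using mu_mono[OF le j i] by simp
    then show False using mN by simp
  qed
qed

definition bi :: "nat \<Rightarrow> bool" where "bi i = the (mu n ls 0 ! i)"

lemma mu_Some: "i < n \<Longrightarrow> j < mi i \<Longrightarrow> mu n ls j ! i = Some (bi i)"
proof -
  assume i: "i < n" and j: "j < mi i"
  have jk: "j \<le> length ls" using j mi_le[OF i] by simp
  then obtain b where b: "mu n ls j ! i = Some b" using mu_None_iff[OF i jk] j by fastforce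
  then have "mu n ls 0 ! i = Some b" using mu_mono[of 0 j i b] jk i by simp
  then show ?thesis using b unfolding bi_def by simp
qed

lemma bary_mu: "i < n \<Longrightarrow> j \<le> length ls \<Longrightarrow> bary (mu n ls j) i = (if j < mi i then cval (bi i) else 1/2)"
proof -
  assume i: "i < n" and j: "j \<le> length ls"
  have len: "i < length (mu n ls j)" using mu_len_dim[OF ch j] i by simp
  show ?thesis
  proof (cases "j < mi i")
    case True
    then show ?thesis using mu_Some[OF i True] fappf_nth_Some[OF len] unfolding bary_def by simp
  next
    case False
    then have "mu n ls j ! i = None" using mu_None_iff[OF i j] by simp
    then show ?thesis using False fappf_const_None[OF len] unfolding bary_def by simp
  qed
qed

lemma Phi_formula:
  assumes s: "s \<in> std_simplex (length ls)" and i: "i < n"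
  shows "Phi n ls s i = (\<Sum>j<mi i. s j) * cval (bi i) + (1 - (\<Sum>j<mi i. s j)) / 2"
proof -
  have s1: "(\<Sum>j\<le>length ls. s j) = 1" using s by (simp add: std_simplex_def)
  have m: "mi i \<le> length ls" using mi_le[OF i] .
  have split: "{..length ls} = {..<mi i} \<union> {mi i..length ls}" using m by auto
  have disj: "{..<mi i} \<inter> {mi i..length ls} = {}" by auto
  have "Phi n ls s i = (\<Sum>j\<le>length ls. s j * (if j < mi i then cval (bi i) else 1/2))"
    unfolding Phi_def using bary_mu[OF i] by (intro sum.cong) auto
  also have "\<dots> = (\<Sum>j<mi i. s j * cval (bi i)) + (\<Sum>j\<in>{mi i..length ls}. s j * (1/2))"
    unfolding split by (subst sum.union_disjoint) (auto intro!: sum.cong)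
  also have "(\<Sum>j\<in>{mi i..length ls}. s j) = 1 - (\<Sum>j<mi i. s j)"
    using s1 unfolding split by (subst (asm) sum.union_disjoint) auto
  then have "(\<Sum>j\<in>{mi i..length ls}. s j * (1/2)) = (1 - (\<Sum>j<mi i. s j)) / 2"
    by (simp add: sum_divide_distrib[symmetric])
  finally show ?thesis by (simp add: sum_distrib_right)
qed

lemma mi_surj: "1 \<le> j \<Longrightarrow> j \<le> length ls \<Longrightarrow> \<exists>i<n. mi i = j"
proof -
  assume j1: "1 \<le> j" and jk: "j \<le> length ls"
  let ?A = "{i. i < n \<and> mu n ls (j - 1) ! i = None}"
  let ?B = "{i. i < n \<and> mu n ls j ! i = None}"
  have "dimv n ls (j - 1) < dimv n ls j" using dimv_mono[OF ch, of "j - 1" j] j1 jk by simp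
  moreover have "fdim (mu n ls (j - 1)) = card ?A" "fdim (mu n ls j) = card ?B"
    using mu_len_dim[OF ch, of "j - 1"] mu_len_dim[OF ch, of j] jk by (auto simp: fdim_card)
  ultimately have "card ?A < card ?B" using mu_len_dim[OF ch, of "j - 1"] mu_len_dim[OF ch, of j] jk by simp
  moreover have "?A \<subseteq> ?B" using mu_None_iff jk by auto
  moreover have "?B - ?A \<noteq> {}"
  proof
    assume "?B - ?A = {}"
    then have "?B \<subseteq> ?A" by blast
    then have "card ?B \<le> card ?A" by (intro card_mono) auto
    then show False using \<open>card ?A < card ?B\<close> by simp
  qed
  then obtain i where "i \<in> ?B" "i \<notin> ?A" by blast
  then have "i < n" "mi i \<le> j" "\<not> mi i \<le> j - 1" using mu_None_iff jk by auto
  then show ?thesis by (intro exI[of _ i]) auto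
qed

end

lemma psum_strict: "(\<And>j. j < b \<Longrightarrow> 0 < s j) \<Longrightarrow> a < (b::nat) \<Longrightarrow> (\<Sum>j<a. s j) < (\<Sum>j<b. (s j :: real))"
proof (induction b)
  case 0 then show ?case by simp
next
  case (Suc b)
  show ?case
  proof (cases "a = b")
    case True then show ?thesis using Suc.prems(1)[of b] by simp
  next
    case False
    then have "(\<Sum>j<a. s j) < (\<Sum>j<b. s j)" using Suc by simp
    then show ?thesis using Suc.prems(1)[of b] by simp
  qed
qed

lemma D_formula:
  assumes c: "chain n ls" and s: "s \<in> std_simplex (length ls)" and i: "i < n"
  shows "\<bar>2 * Phi n ls s i - 1\<bar> = (\<Sum>j<mi n ls i. s j)"
proof -
  have "0 \<le> (\<Sum>j<mi n ls i. s j)" using s mi_le[OF c i] by (intro sum_nonneg) (auto simp: std_simplex_def)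
  then show ?thesis using Phi_formula[OF c s i] by (cases "bi n ls i") (auto simp: cval_def field_simps)
qed

lemma bary_unique:
  assumes c1: "chain n ls1" and c2: "chain n ls2"
    and s1: "s1 \<in> std_simplex (length ls1)" and s2: "s2 \<in> std_simplex (length ls2)"
    and p1: "\<And>j. j \<le> length ls1 \<Longrightarrow> 0 < s1 j" and p2: "\<And>j. j \<le> length ls2 \<Longrightarrow> 0 < s2 j"
    and eq: "Phi n ls1 s1 = Phi n ls2 s2"
  shows "ls1 = ls2 \<and> s1 = s2"
proof -
  define k1 where "k1 = length ls1"
  define k2 where "k2 = length ls2"
  define g1 where "g1 m = (\<Sum>j<m. s1 j)" for m
  define g2 where "g2 m = (\<Sum>j<m. s2 j)" for m
  define D where "D i = \<bar>2 * Phi n ls1 s1 i - 1\<bar>" for i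
  have D1: "D i = g1 (mi n ls1 i)" if "i < n" for i unfolding D_def g1_def using D_formula[OF c1 s1 that] .
  have D2: "D i = g2 (mi n ls2 i)" if "i < n" for i unfolding D_def g2_def eq using D_formula[OF c2 s2 that] .
  have mono1: "g1 a < g1 b" if "a < b" "b \<le> k1" for a b
    unfolding g1_def using that p1 unfolding k1_def by (intro psum_strict) auto
  have mono2: "g2 a < g2 b" if "a < b" "b \<le> k2" for a b
    unfolding g2_def using that p2 unfolding k2_def by (intro psum_strict) auto
  define V where "V = insert 0 (D ` {..<n})"
  have V1: "V = g1 ` {..k1}"
  proof
    show "V \<subseteq> g1 ` {..k1}" unfolding V_def
    proof (intro subsetI)
      fix v assume "v \<in> insert 0 (D ` {..<n})"
      then consider "v = 0" | i where "i < n" "v = D i" by auto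
      then show "v \<in> g1 ` {..k1}"
      proof cases
        case 1 then show ?thesis by (intro image_eqI[of _ _ 0]) (auto simp: g1_def)
      next
        case 2 then show ?thesis using D1 mi_le[OF c1] unfolding k1_def by auto
      qed
    qed
    show "g1 ` {..k1} \<subseteq> V"
    proof
      fix v assume "v \<in> g1 ` {..k1}"
      then obtain j where j: "j \<le> k1" "v = g1 j" by auto
      show "v \<in> V"
      proof (cases "j = 0")
        case True then show ?thesis using j by (simp add: V_def g1_def)
      next
        case False
        then obtain i where "i < n" "mi n ls1 i = j" using mi_surj[OF c1, of j] j unfolding k1_def by auto
        then show ?thesis using j D1 unfolding V_def by auto
      qed
    qed
  qed
  have V2: "V = g2 ` {..k2}"
  proof
    show "V \<subseteq> g2 ` {..k2}" unfolding V_def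
    proof (intro subsetI)
      fix v assume "v \<in> insert 0 (D ` {..<n})"
      then consider "v = 0" | i where "i < n" "v = D i" by auto
      then show "v \<in> g2 ` {..k2}"
      proof cases
        case 1 then show ?thesis by (intro image_eqI[of _ _ 0]) (auto simp: g2_def)
      next
        case 2 then show ?thesis using D2 mi_le[OF c2] unfolding k2_def by auto
      qed
    qed
    show "g2 ` {..k2} \<subseteq> V"
    proof
      fix v assume "v \<in> g2 ` {..k2}"
      then obtain j where j: "j \<le> k2" "v = g2 j" by auto
      show "v \<in> V"
      proof (cases "j = 0")
        case True then show ?thesis using j by (simp add: V_def g2_def)
      next
        case False
        then obtain i where "i < n" "mi n ls2 i = j" using mi_surj[OF c2, of j] j unfolding k2_def by auto
        then show ?thesis using j D2 unfolding V_def by auto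
      qed
    qed
  qed
  have sl1: "sorted_wrt (<) (map g1 [0..<Suc k1])"
    unfolding sorted_wrt_iff_nth_less by (simp del: upt_Suc add: mono1)
  have sl2: "sorted_wrt (<) (map g2 [0..<Suc k2])"
    unfolding sorted_wrt_iff_nth_less by (simp del: upt_Suc add: mono2)
  have "set (map g1 [0..<Suc k1]) = g1 ` {..k1}" "set (map g2 [0..<Suc k2]) = g2 ` {..k2}"
    by (simp_all only: set_map set_upt atLeast0LessThan lessThan_Suc_atMost)
  then have "set (map g1 [0..<Suc k1]) = set (map g2 [0..<Suc k2])"
    using V1 V2 by simp
  then have L: "map g1 [0..<Suc k1] = map g2 [0..<Suc k2]"
    using sl1 sl2 unfolding strict_sorted_iff by (intro sorted_distinct_set_unique) auto
  have "length (map g1 [0..<Suc k1]) = length (map g2 [0..<Suc k2])" using L by (rule arg_cong)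
  then have kk: "k1 = k2" by (simp only: length_map length_upt)
  have gg: "g1 j = g2 j" if "j \<le> k1" for j
    using arg_cong[OF L, of "\<lambda>l. l ! j"] that kk by (simp del: upt_Suc)
  have ss: "s1 = s2"
  proof
    fix j
    show "s1 j = s2 j"
    proof (cases "j < k1")
      case True
      then show ?thesis using gg[of j] gg[of "Suc j"] unfolding g1_def g2_def by simp
    next
      case False
      show ?thesis
      proof (cases "j = k1")
        case True
        have "(\<Sum>i\<le>k1. s1 i) = 1" "(\<Sum>i\<le>k2. s2 i) = 1" using s1 s2 unfolding k1_def k2_def by (auto simp: std_simplex_def)
        then have "g1 k1 + s1 k1 = 1" "g2 k1 + s2 k1 = 1" unfolding g1_def g2_def kk by (simp_all add: lessThan_Suc_atMost[symmetric])
        then show ?thesis using gg[of k1] True by simp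
      next
        case False
        then have "j > k1" using \<open>\<not> j < k1\<close> by simp
        then show ?thesis using s1 s2 kk unfolding k1_def k2_def by (simp add: std_simplex_def)
      qed
    qed
  qed
  have inj1: "inj_on g1 {..k1}"
    by (rule inj_onI) (metis atMost_iff less_irrefl linorder_neqE_nat mono1)
  have mm: "mi n ls1 i = mi n ls2 i" if "i < n" for i
  proof -
    have "g1 (mi n ls1 i) = g1 (mi n ls2 i)" using D1[OF that] D2[OF that] gg[of "mi n ls2 i"] mi_le[OF c2 that] kk
      unfolding k2_def by simp
    then show ?thesis using inj1 mi_le[OF c1 that] mi_le[OF c2 that] kk unfolding k1_def k2_def inj_on_def by auto
  qed
  have bb: "bi n ls1 i = bi n ls2 i" if "i < n" "0 < mi n ls1 i" for i
  proof -
    have g0: "0 < g1 (mi n ls1 i)" using mono1[of 0 "mi n ls1 i"] that mi_le[OF c1 that(1)] unfolding k1_def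
      by (simp add: g1_def)
    have P: "Phi n ls1 s1 i = Phi n ls2 s2 i" using eq by simp
    have "Phi n ls1 s1 i = g1 (mi n ls1 i) * cval (bi n ls1 i) + (1 - g1 (mi n ls1 i)) / 2"
      using Phi_formula[OF c1 s1 that(1)] unfolding g1_def .
    moreover have "Phi n ls2 s2 i = g1 (mi n ls1 i) * cval (bi n ls2 i) + (1 - g1 (mi n ls1 i)) / 2"
      using Phi_formula[OF c2 s2 that(1)] mm[OF that(1)] ss unfolding g1_def by simp
    ultimately have "g1 (mi n ls1 i) * cval (bi n ls1 i) + (1 - g1 (mi n ls1 i)) / 2 =
       g1 (mi n ls1 i) * cval (bi n ls2 i) + (1 - g1 (mi n ls1 i)) / 2"
      using P by linarith
    then have "cval (bi n ls1 i) = cval (bi n ls2 i)" using g0 by simp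
    then show ?thesis by (cases "bi n ls1 i"; cases "bi n ls2 i") (auto simp: cval_def)
  qed
  have mueq: "mu n ls1 j = mu n ls2 j" if "j \<le> k1" for j
  proof (rule nth_equalityI)
    show "length (mu n ls1 j) = length (mu n ls2 j)"
      using mu_len_dim[OF c1, of j] mu_len_dim[OF c2, of j] that kk unfolding k1_def k2_def by simp
    fix i assume "i < length (mu n ls1 j)"
    then have i: "i < n" using mu_len_dim[OF c1, of j] that unfolding k1_def by simp
    show "mu n ls1 j ! i = mu n ls2 j ! i"
    proof (cases "j < mi n ls1 i")
      case True
      then show ?thesis using mu_Some[OF c1 i True] mu_Some[OF c2 i] mm[OF i] bb[OF i] by simp
    next
      case False
      then show ?thesis using mu_None_iff[OF c1 i, of j] mu_None_iff[OF c2 i, of j] mm[OF i] that kk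
        unfolding k1_def k2_def by simp
    qed
  qed
  have "ls1 = ls2"
  proof (rule nth_equalityI)
    show "length ls1 = length ls2" using kk unfolding k1_def k2_def .
    fix j assume j: "j < length ls1"
    have e1: "mu n ls1 j = fcomp (mu n ls1 (Suc j)) (ls1 ! j)" using mu_step j by simp
    have e2: "mu n ls2 j = fcomp (mu n ls2 (Suc j)) (ls2 ! j)" using mu_step j kk unfolding k1_def k2_def by simp
    have l1: "length (ls1 ! j) = fdim (mu n ls1 (Suc j))"
      using chain_len[OF c1 j] mu_len_dim[OF c1, of "Suc j"] j by simp
    have l2: "length (ls2 ! j) = fdim (mu n ls2 (Suc j))"
      using chain_len[OF c2, of j] mu_len_dim[OF c2, of "Suc j"] j kk unfolding k1_def k2_def by simp
    show "ls1 ! j = ls2 ! j"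
      using fcomp_cancel[OF l1, of "ls2 ! j"] l2 e1 e2 mueq[of j] mueq[of "Suc j"] j unfolding k1_def by simp
  qed
  then show ?thesis using ss by simp
qed

fun mask :: "'c option list \<Rightarrow> 'c option list \<Rightarrow> 'c option list" where
  "mask (None # P) (q # Q) = q # mask P Q"
| "mask (Some _ # P) (q # Q) = mask P Q"
| "mask _ _ = []"

definition refines :: "'c option list \<Rightarrow> 'c option list \<Rightarrow> bool" where
  "refines P Q \<longleftrightarrow> list_all2 (\<lambda>p q. p = None \<or> q = p) P Q"

lemma mask_props:
  "refines P Q \<Longrightarrow> fcomp P (mask P Q) = Q \<and> length (mask P Q) = fdim P \<and> fdim (mask P Q) = fdim Q"
proof (induction P arbitrary: Q)
  case Nil then show ?case by (simp add: refines_def)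
next
  case (Cons p P)
  then obtain q Q' where Q: "Q = q # Q'" and r: "p = None \<or> q = p" and r': "refines P Q'"
    unfolding refines_def by (cases Q) auto
  show ?case
  proof (cases p)
    case None then show ?thesis using Cons.IH[OF r'] Q by (simp add: fdim_Cons)
  next
    case (Some c) then show ?thesis using Cons.IH[OF r'] Q r by simp
  qed
qed

lemma refinesI: "length P = length Q \<Longrightarrow> (\<And>i. i < length P \<Longrightarrow> P ! i = None \<or> Q ! i = P ! i) \<Longrightarrow> refines P Q"
  unfolding refines_def by (simp add: list_all2_conv_all_nth)

lemma dimv_ge: "chain n ls \<Longrightarrow> j \<le> length ls \<Longrightarrow> j \<le> dimv n ls j"
proof (induction j)
  case 0 then show ?case by simp
next
  case (Suc j) then show ?case using chain_dim_lt[of n ls j] by simp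
qed

lemma chain_bounds: "chain n ls \<Longrightarrow> length ls \<le> n \<and> (\<forall>l\<in>set ls. length l \<le> n)"
proof -
  assume c: "chain n ls"
  have "length ls \<le> n" using dimv_ge[OF c, of "length ls"] by (simp add: dimv_def)
  moreover have "length l \<le> n" if "l \<in> set ls" for l
  proof -
    obtain j where j: "j < length ls" "l = ls ! j" using \<open>l \<in> set ls\<close> by (auto simp: in_set_conv_nth)
    have "dimv n ls (Suc j) \<le> dimv n ls (length ls)"
      using dimv_mono[OF c, of "Suc j" "length ls"] j by (cases "Suc j = length ls") auto
    then show ?thesis using chain_len[OF c j(1)] j by (simp add: dimv_def)
  qed
  ultimately show ?thesis by blast
qed


lemma cover_construct:
  assumes t: "t \<in> std_cube n"
  shows "\<exists>ls s. chain n ls \<and> s \<in> std_simplex (length ls) \<and> Phi n ls s = t"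
proof -
  have t01: "0 \<le> t i \<and> t i \<le> 1" if "i < n" for i using t that by (simp add: std_cube_def)
  have tb: "t i = 0" if "i \<ge> n" for i using t that by (simp add: std_cube_def)
  define D where "D i = \<bar>2 * t i - 1\<bar>" for i
  define V where "V = insert 0 (D ` {..<n})"
  have finV: "finite V" unfolding V_def by simp
  have V01: "0 \<le> v \<and> v \<le> 1" if "v \<in> V" for v
    using that t01 unfolding V_def D_def by (auto simp: abs_if)
  define L where "L = sorted_list_of_set V"
  have setL: "set L = V" unfolding L_def using finV by simp
  have sL: "sorted_wrt (<) L" unfolding L_def by (rule strict_sorted_list_of_set)
  have "L \<noteq> []" using setL unfolding V_def by auto
  define k where "k = length L - 1"
  have lenL: "length L = Suc k" unfolding k_def using \<open>L \<noteq> []\<close> by (cases L) auto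
  define g where "g j = L ! j" for j
  have gmono: "g a < g b" if "a < b" "b \<le> k" for a b
    unfolding g_def using sorted_wrt_nth_less[OF sL that(1)] that lenL by simp
  have gV: "g j \<in> V" if "j \<le> k" for j unfolding g_def using that lenL setL by (metis le_imp_less_Suc nth_mem)
  have g0: "g 0 = 0"
  proof -
    have "0 \<in> set L" using setL unfolding V_def by simp
    then obtain j0 where j0: "j0 < Suc k" "g j0 = 0" unfolding g_def using lenL by (metis in_set_conv_nth)
    have "0 \<le> g 0" using V01[OF gV[of 0]] by simp
    moreover have "g 0 \<le> g j0" using gmono[of 0 j0] j0 by (cases j0) auto
    ultimately show ?thesis using j0 by simp
  qed
  have ginj: "a = b" if "a \<le> k" "b \<le> k" "g a = g b" for a b
  proof (rule ccontr)
    assume ne: "a \<noteq> b"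
    show False
    proof (cases "a < b")
      case True then show False using gmono[of a b] that by simp
    next
      case False then have "b < a" using ne by simp
      then show False using gmono[of b a] that by simp
    qed
  qed
  have Dex: "\<exists>j. j \<le> k \<and> g j = D i" if "i < n" for i
  proof -
    have "D i \<in> set L" using setL that unfolding V_def by simp
    then obtain j where "j < length L" "L ! j = D i" by (metis in_set_conv_nth)
    then show ?thesis unfolding g_def using lenL by (intro exI[of _ j]) auto
  qed
  define m where "m i = (SOME j. j \<le> k \<and> g j = D i)" for i
  have m: "m i \<le> k \<and> g (m i) = D i" if "i < n" for i unfolding m_def using someI_ex[OF Dex[OF that]] .
  define b where "b i = (1/2 < t i)" for i
  define M where "M j = map (\<lambda>i. if j < m i then Some (b i) else None) [0..<n]" for j
  define ls where "ls = map (\<lambda>j. mask (M (Suc j)) (M j)) [0..<k]"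
  have lenM: "length (M j) = n" for j unfolding M_def by simp
  have Mnth: "M j ! i = (if j < m i then Some (b i) else None)" if "i < n" for i j unfolding M_def using that by simp
  have ref: "refines (M (Suc j)) (M j)" for j
    by (rule refinesI) (auto simp: lenM Mnth)
  have lsj: "ls ! j = mask (M (Suc j)) (M j)" if "j < k" for j unfolding ls_def using that by simp
  have lenls: "length ls = k" unfolding ls_def by simp
  have fdimM: "fdim (M j) = card {i. i < n \<and> m i \<le> j}" for j
    unfolding fdim_card lenM by (rule arg_cong[where f = card]) (auto simp: Mnth split: if_splits)
  have Mk: "M k = replicate n None"
  proof (rule nth_equalityI)
    show "length (M k) = length (replicate n None :: bool option list)" by (simp add: lenM)
    fix i assume "i < length (M k)"
    then have i: "i < n" by (simp add: lenM)
    show "M k ! i = replicate n None ! i" using Mnth[OF i, of k] m[OF i] i by simp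
  qed
  have fdim_lt: "fdim (M j) < fdim (M (Suc j))" if "j < k" for j
  proof -
    have "g (Suc j) \<in> V" using gV that by simp
    moreover have "g (Suc j) \<noteq> 0" using gmono[of 0 "Suc j"] that g0 by simp
    ultimately obtain i where i: "i < n" "D i = g (Suc j)" unfolding V_def by auto
    then have mi: "m i = Suc j" using m[OF i(1)] ginj[of "m i" "Suc j"] that by simp
    have sub: "{i. i < n \<and> m i \<le> j} \<subseteq> {i. i < n \<and> m i \<le> Suc j}" by auto
    have "i \<in> {i. i < n \<and> m i \<le> Suc j}" "i \<notin> {i. i < n \<and> m i \<le> j}" using i mi by auto
    then have "{i. i < n \<and> m i \<le> j} \<subset> {i. i < n \<and> m i \<le> Suc j}" using sub by blast
    moreover have "finite {i. i < n \<and> m i \<le> Suc j}" by simp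
    ultimately show ?thesis unfolding fdimM by (rule psubset_card_mono[rotated])
  qed
  have chn: "chain n ls"
    unfolding chain_def lenls
  proof (intro conjI allI impI)
    fix j assume j: "j < k"
    show "fdim (ls ! j) < length (ls ! j)" using mask_props[OF ref[of j]] fdim_lt[OF j] lsj[OF j] by simp
  next
    fix j assume j: "Suc j < k"
    show "length (ls ! j) = fdim (ls ! Suc j)" using mask_props[OF ref[of j]] mask_props[OF ref[of "Suc j"]] lsj j by simp
  next
    assume k0: "0 < k"
    have "length (ls ! (k - 1)) = fdim (M k)" using mask_props[OF ref[of "k - 1"]] lsj[of "k - 1"] k0 by simp
    then show "length (ls ! (k - 1)) = n" unfolding Mk by simp
  qed
  have muM: "mu n ls j = M j" if "j \<le> k" for j
    using that
  proof (induction rule: inc_induct)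
    case base then show ?case using mu_top[of ls k n] lenls Mk by simp
  next
    case (step j)
    have "mu n ls j = fcomp (mu n ls (Suc j)) (ls ! j)" using mu_step[of j ls n] step lenls by simp
    then show ?case using step mask_props[OF ref[of j]] lsj[of j] by simp
  qed
  have mieq: "mi n ls i = m i" if i: "i < n" for i
  proof -
    have "mi n ls i = (LEAST j. mu n ls j ! i = None)" by (rule mi_def[OF chn])
    also have "\<dots> = m i"
  proof (rule Least_equality)
    show "mu n ls (m i) ! i = None" using muM[of "m i"] m[OF i] Mnth[OF i] by simp
    fix j assume "mu n ls j ! i = None"
    then show "m i \<le> j"
    proof (cases "j \<le> k")
      case True then show ?thesis using \<open>mu n ls j ! i = None\<close> muM Mnth[OF i] by (auto split: if_splits)
    next
      case False then show ?thesis using m[OF i] by simp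
    qed
  qed
  finally show ?thesis .
  qed
  have bieq: "bi n ls i = b i" if i: "i < n" "0 < m i" for i
    using muM[of 0] Mnth[OF i(1), of 0] i(2) by (simp add: bi_def[OF chn])
  define s where "s j = (if j < k then g (Suc j) - g j else if j = k then 1 - g k else 0)" for j
  have sumg: "(\<Sum>j<q. s j) = g q" if "q \<le> k" for q
  proof -
    have "(\<Sum>j<q. s j) = (\<Sum>j<q. g (Suc j) - g j)" using that unfolding s_def by (intro sum.cong) auto
    then show ?thesis using g0 by (simp add: sum_lessThan_telescope)
  qed
  have sS: "s \<in> std_simplex k"
  proof -
    have "0 \<le> s j" for j
      unfolding s_def using gmono[of j "Suc j"] V01[OF gV[of k]] by auto
    moreover have "(\<Sum>j\<le>k. s j) = 1" using sumg[of k] by (simp add: lessThan_Suc_atMost[symmetric] s_def)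
    moreover have "s j = 0" if "j > k" for j using that unfolding s_def by simp
    ultimately show ?thesis unfolding std_simplex_def by auto
  qed
  have "Phi n ls s = t"
  proof
    fix i
    show "Phi n ls s i = t i"
    proof (cases "i < n")
      case False
      have "Phi n ls s \<in> std_cube n" using totp2[OF chn] sS lenls by simp
      then show ?thesis using False tb by (simp add: std_cube_def)
    next
      case True
      have P: "Phi n ls s i = g (m i) * cval (bi n ls i) + (1 - g (m i)) / 2"
        using Phi_formula[OF chn _ True, of s] sS lenls mieq[OF True] sumg[of "m i"] m[OF True] by simp
      have Dg: "g (m i) = \<bar>2 * t i - 1\<bar>" using m[OF True] unfolding D_def by simp
      show ?thesis
      proof (cases "m i = 0")
        case True
        then have "t i = 1/2" using Dg g0 by simp
        then show ?thesis using P Dg \<open>m i = 0\<close> g0 by simp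
      next
        case False
        have bb: "bi n ls i = (1/2 < t i)" using bieq[OF True] False unfolding b_def by simp
        show ?thesis
        proof (cases "1/2 < t i")
          case True
          then have "g (m i) = 2 * t i - 1" using Dg by simp
          then show ?thesis using P bb True by (simp add: cval_def field_simps)
        next
          case False
          then have "g (m i) = 1 - 2 * t i" using Dg by simp
          then show ?thesis using P bb False by (simp add: cval_def field_simps)
        qed
      qed
    qed
  qed
  then show ?thesis using chn sS lenls by blast
qed


lemma strip_A2:
  assumes C: "cube_set C c" and a: "a \<in> real_total (sd_delta C) std_simplex"
  shows "\<exists>p z s'. (p, z, s') \<in> real_total (sd_delta C) std_simplex \<and> (\<forall>j\<le>p. 0 < s' j) \<and>
     ((p, z, s'), a) \<in> grel (sd_delta C) std_simplex sface (sd_delta_act c) (\<lambda>l. fappf l sval)"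
proof -
  obtain k z s where a_eq: "a = (k, z, s)" and z: "z \<in> sd_delta C k" and s: "s \<in> std_simplex k"
    using a by (auto simp: real_total_def)
  define lam where "lam = fpt dec_s (k + 1) s"
  define s' where "s' = strp dec_s (k + 1) s"
  have ge: "1 \<le> fdim lam" and lf: "lam \<in> sface (fdim lam - 1) k" and s'S: "s' \<in> std_simplex (fdim lam - 1)"
    using strip_simplex[OF s] unfolding lam_def s'_def by auto
  have van: "\<forall>i\<ge>k + 1. s i = 0" using s by (simp add: std_simplex_def)
  have r: "((fdim lam - 1, sd_delta_act c lam z, s'), (k, z, s))
     \<in> grel (sd_delta C) std_simplex (faces_of 1) (sd_delta_act c) (\<lambda>l. fappf l sval)"
    unfolding lam_def s'_def
    by (rule strip_rel[where S = "sd_delta C" and k = 1, OF dec_s_v _ _ z van]) (use lf s'S lam_def s'_def in simp_all)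
  have v: "sd_delta_act c lam z \<in> sd_delta C (fdim lam - 1)" using validA2[OF C lf z] .
  have int: "0 < s' j" if "j \<le> fdim lam - 1" for j
  proof -
    have "j < fdim lam" using that ge by simp
    then have "dec_s (s' j) = None" unfolding s'_def lam_def using strp_interior by blast
    moreover have "0 \<le> s' j" using s'S that by (simp add: std_simplex_def)
    ultimately show ?thesis by (auto simp: dec_s_None)
  qed
  show ?thesis using r v s'S int unfolding a_eq
    by (intro exI[of _ "fdim lam - 1"] exI[of _ "sd_delta_act c lam z"] exI[of _ s']) (simp add: real_total_def)
qed

lemma F2_interior_canon:
  assumes C: "cube_set C c" and a: "(p, (n, x, ls), s) \<in> real_total (sd_delta C) std_simplex"
    and int: "\<And>j. j \<le> p \<Longrightarrow> 0 < s j"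
  shows "canon 0 dec_c c (F2 (p, (n, x, ls), s)) = F2 (p, (n, x, ls), s)"
proof -
  have xC: "x \<in> C n" and lp: "length ls = p" and ch: "chain n ls" and sS: "s \<in> std_simplex p"
    using a by (auto simp: real_total_def sd_delta_chain)
  have sS': "s \<in> std_simplex (length ls)" using sS lp by simp
  have s1: "(\<Sum>j<p. s j) + s p = 1" using sS by (simp add: std_simplex_def lessThan_Suc_atMost[symmetric])
  have s0: "0 \<le> s j" for j using sS by (cases "j \<le> p") (auto simp: std_simplex_def)
  have inner: "0 < Phi n ls s i \<and> Phi n ls s i < 1" if i: "i < n" for i
  proof -
    define g where "g = (\<Sum>j<mi n ls i. s j)"
    have g0: "0 \<le> g" unfolding g_def using s0 by (intro sum_nonneg) auto
    have "g \<le> (\<Sum>j<p. s j)" unfolding g_def using mi_le[OF ch i] lp s0 by (intro sum_mono2) auto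
    then have g1: "g < 1" using s1 int[of p] by simp
    have P: "Phi n ls s i = g * cval (bi n ls i) + (1 - g) / 2" unfolding g_def using Phi_formula[OF ch sS' i] .
    show ?thesis using P g0 g1 by (cases "bi n ls i") (auto simp: cval_def field_simps)
  qed
  have "canon 0 dec_c c (n, x, Phi n ls s) = (n, x, Phi n ls s)"
  proof (rule canon_interior)
    show "presheaf 0 C c" using C by (simp add: cube_set_def)
    show "x \<in> C n" using xC .
    fix i assume "i < n + 0"
    then show "dec_c (Phi n ls s i) = None" using inner[of i] by (auto simp: dec_c_None)
  next
    show "\<forall>i\<ge>n + 0. Phi n ls s i = 0" using totp2[OF ch sS'] by (simp add: std_cube_def)
  qed
  then show ?thesis by (simp add: F2_def)
qed

lemma inj2:
  assumes C: "cube_set C c" and a: "a \<in> real_total (sd_delta C) std_simplex" and b: "b \<in> real_total (sd_delta C) std_simplex"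
    and r: "(F2 a, F2 b) \<in> grel C std_cube cface c (\<lambda>l. fappf l cval)"
  shows "(a, b) \<in> grel (sd_delta C) std_simplex sface (sd_delta_act c) (\<lambda>l. fappf l sval)"
proof -
  let ?RA = "grel (sd_delta C) std_simplex sface (sd_delta_act c) (\<lambda>l. fappf l sval)"
  let ?RB = "grel C std_cube cface c (\<lambda>l. fappf l cval)"
  have eqA: "equiv UNIV ?RA" and eqB: "equiv UNIV ?RB" by (rule equiv_grel)+
  have respR: "(F2 z, F2 w) \<in> ?RB" if "(z, w) \<in> ?RA" for z w
    using that resp2[OF C] eqB by (rule grel_induct_resp)
  obtain p z1 t1 where A: "(p, z1, t1) \<in> real_total (sd_delta C) std_simplex" "\<forall>j\<le>p. 0 < t1 j"
    "((p, z1, t1), a) \<in> ?RA" using strip_A2[OF C a] by blast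
  obtain q z2 t2 where B: "(q, z2, t2) \<in> real_total (sd_delta C) std_simplex" "\<forall>j\<le>q. 0 < t2 j"
    "((q, z2, t2), b) \<in> ?RA" using strip_A2[OF C b] by blast
  obtain n1 x1 ls1 where z1: "z1 = (n1, x1, ls1)" by (cases z1) auto
  obtain n2 x2 ls2 where z2: "z2 = (n2, x2, ls2)" by (cases z2) auto
  have "(F2 (p, z1, t1), F2 (q, z2, t2)) \<in> ?RB"
  proof -
    have 1: "(F2 (p, z1, t1), F2 a) \<in> ?RB" using respR[OF A(3)] .
    have 2: "(F2 b, F2 (q, z2, t2)) \<in> ?RB" using respR[OF B(3)] eqB by (meson equiv_def symE)
    show ?thesis using 1 r 2 eqB by (meson equiv_def transE)
  qed
  then have "canon 0 dec_c c (F2 (p, z1, t1)) = canon 0 dec_c c (F2 (q, z2, t2))"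
  proof (rule canon_rel[rotated 3])
    show "presheaf 0 C c" using C by (simp add: cube_set_def)
    show "\<And>c. dec_c (cval c) = Some c" by (rule dec_c_v2)
  qed simp
  then have eq: "F2 (p, z1, t1) = F2 (q, z2, t2)"
    using F2_interior_canon[OF C A(1)[unfolded z1]] F2_interior_canon[OF C B(1)[unfolded z2]] A(2) B(2)
    unfolding z1 z2 by simp
  have c1: "chain n1 ls1" "length ls1 = p" "t1 \<in> std_simplex p" using A(1) z1 by (auto simp: real_total_def sd_delta_chain)
  have c2: "chain n2 ls2" "length ls2 = q" "t2 \<in> std_simplex q" using B(1) z2 by (auto simp: real_total_def sd_delta_chain)
  have e: "n1 = n2" "x1 = x2" "Phi n1 ls1 t1 = Phi n2 ls2 t2" using eq unfolding z1 z2 F2_def by auto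
  have "ls1 = ls2 \<and> t1 = t2"
    using bary_unique[OF c1(1), of ls2 t1 t2] c2 c1 e A(2) B(2) by simp
  then have "(p, z1, t1) = (q, z2, t2)" using z1 z2 e c1(2) c2(2) by auto
  then have "((q, z2, t2), a) \<in> ?RA" using A(3) by simp
  then have "(a, (q, z2, t2)) \<in> ?RA" using eqA by (meson equiv_def symE)
  then show ?thesis using B(3) eqA by (meson equiv_def transE)
qed

lemma cover2:
  assumes x: "x \<in> C n"
  shows "\<exists>K. finite K \<and> (\<forall>(k, z)\<in>K. z \<in> sd_delta C k \<and> (fst z, fst (snd z)) = (n, x)) \<and>
     std_cube n \<subseteq> (\<Union>(k, z)\<in>K. (\<lambda>s. Phi (fst z) (snd (snd z)) s) ` std_simplex k)"
proof -
  define K where "K = {(k, (n, x, ls)) | k ls. (n, x, ls) \<in> sd_delta C k}"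
  have "finite {l :: bool option list. set l \<subseteq> UNIV \<and> length l \<le> n}" by (intro finite_lists_length_le) simp
  then have "finite {ls. set ls \<subseteq> {l :: bool option list. set l \<subseteq> UNIV \<and> length l \<le> n} \<and> length ls \<le> n}"
    by (rule finite_lists_length_le)
  moreover have "K \<subseteq> (\<lambda>ls. (length ls, (n, x, ls))) ` {ls. set ls \<subseteq> {l :: bool option list. set l \<subseteq> UNIV \<and> length l \<le> n} \<and> length ls \<le> n}"
  proof
    fix e assume "e \<in> K"
    then obtain k ls where e: "e = (k, (n, x, ls))" "(n, x, ls) \<in> sd_delta C k" unfolding K_def by auto
    then have "chain n ls" "length ls = k" by (auto simp: sd_delta_chain)
    then show "e \<in> (\<lambda>ls. (length ls, (n, x, ls))) ` {ls. set ls \<subseteq> {l. set l \<subseteq> UNIV \<and> length l \<le> n} \<and> length ls \<le> n}"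
      using chain_bounds[of n ls] e by auto
  qed
  ultimately have fin: "finite K" by (meson finite_imageI finite_subset)
  have inK: "\<forall>(k, z)\<in>K. z \<in> sd_delta C k \<and> (fst z, fst (snd z)) = (n, x)" unfolding K_def by auto
  have cov: "t \<in> (\<Union>(k, z)\<in>K. (\<lambda>s. Phi (fst z) (snd (snd z)) s) ` std_simplex k)" if t: "t \<in> std_cube n" for t
  proof -
    obtain ls s where ls: "chain n ls" "s \<in> std_simplex (length ls)" "Phi n ls s = t" using cover_construct[OF t] by blast
    have "(length ls, (n, x, ls)) \<in> K" unfolding K_def using ls x by (auto simp: sd_delta_chain)
    moreover have "t \<in> (\<lambda>s. Phi (fst (n, x, ls)) (snd (snd (n, x, ls))) s) ` std_simplex (length ls)"
      using ls by (intro image_eqI[where x = s]) simp_all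
    ultimately show ?thesis by (intro UN_I[where a = "(length ls, (n, x, ls))"]) simp_all
  qed
  have "std_cube n \<subseteq> (\<Union>(k, z)\<in>K. (\<lambda>s. Phi (fst z) (snd (snd z)) s) ` std_simplex k)"
    using cov by (rule subsetI)
  then show ?thesis using fin inK by (intro exI[of _ K]) simp
qed

theorem part2:
  assumes C: "cube_set C c"
  shows "cube_real C c homeomorphic_space delta_real (sd_delta C) (sd_delta_act c)"
proof -
  have "delta_real (sd_delta C) (sd_delta_act c) homeomorphic_space cube_real C c"
    unfolding cube_real_def delta_real_def
  proof (rule realisation_homeo[where fc = "\<lambda>k z. (fst z, fst (snd z))"
        and fphi = "\<lambda>k z s. Phi (fst z) (snd (snd z)) s" and F = F2])
    show "F2 (k, z, s) = (fst (fst z, fst (snd z)), snd (fst z, fst (snd z)), Phi (fst z) (snd (snd z)) s)" for k z s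
      by (cases z) (simp add: F2_def)
    show "sd_delta_act c l z \<in> sd_delta C p \<and> fappf l sval s \<in> std_simplex k"
      if "l \<in> sface p k" "z \<in> sd_delta C k" "s \<in> std_simplex p" for p k l z s
      using validA2[OF C that(1,2)] fappf_simplex[OF that(1,3)] by simp
    show "c l x \<in> C p \<and> fappf l cval t \<in> std_cube n"
      if "l \<in> cface p n" "x \<in> C n" "t \<in> std_cube p" for p n l x t
      using C that fappf_cube[OF that(1,3)] unfolding cube_set_def presheaf_def by blast
    show "snd (fst z, fst (snd z)) \<in> C (fst (fst z, fst (snd z)))" if "z \<in> sd_delta C k" for k z
      using that by (cases z) (auto simp: sd_delta_chain)
    show "Phi (fst z) (snd (snd z)) s \<in> std_cube (fst (fst z, fst (snd z)))"
      if "z \<in> sd_delta C k" "s \<in> std_simplex k" for k z s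
      using that totp2 by (cases z) (auto simp: sd_delta_chain)
    show "continuous_on (std_simplex k) (\<lambda>s. Phi (fst z) (snd (snd z)) s)" if "z \<in> sd_delta C k" for k z
      using cont2 continuous_on_subset by blast
    show "(F2 (p, sd_delta_act c l z, s), F2 (k, z, fappf l sval s)) \<in> grel C std_cube cface c (\<lambda>l. fappf l cval)"
      if "l \<in> sface p k" "z \<in> sd_delta C k" "s \<in> std_simplex p" for p k l z s
      using resp2[OF C that] .
    show "(a, b) \<in> grel (sd_delta C) std_simplex sface (sd_delta_act c) (\<lambda>l. fappf l sval)"
      if "a \<in> real_total (sd_delta C) std_simplex" "b \<in> real_total (sd_delta C) std_simplex"
        "(F2 a, F2 b) \<in> grel C std_cube cface c (\<lambda>l. fappf l cval)" for a b
      using inj2[OF C that] .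
    show "\<exists>K. finite K \<and> (\<forall>(k, z)\<in>K. z \<in> sd_delta C k \<and> (fst z, fst (snd z)) = (m, y)) \<and>
       std_cube m \<subseteq> (\<Union>(k, z)\<in>K. (\<lambda>s. Phi (fst z) (snd (snd z)) s) ` std_simplex k)"
      if "y \<in> C m" for m y
      using cover2[of y C m] that by blast
    show "compact (std_simplex n)" for n by (rule compact_std_simplex)
  qed
  then show ?thesis using homeomorphic_space_sym[THEN iffD1] by metis
qed

theorem proposition1p2:
  shows "(\<forall>(X :: nat \<Rightarrow> 'a set) d. delta_set X d \<longrightarrow>
            delta_real X d homeomorphic_space cube_real (sd_box X) (sd_box_act d)) \<and>
         (\<forall>(C :: nat \<Rightarrow> 'b set) c. cube_set C c \<longrightarrow>
            cube_real C c homeomorphic_space delta_real (sd_delta C) (sd_delta_act c))"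
  using part1 part2 by blast


end
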